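(* Fix an integer $r\ge2$, $\varepsilon>0$ and an integer $K\ge\lceil 2^{r+1}/\varepsilon^r\rceil+1$, and let $a>0$ be a constant. Let $p=d/\binom{n-1}{r-1}$ and consider the interpolation path $A^{(0)},\dots,A^{(T)}$ for $\mathcal{H}_r(n,p)$ of any length $T\le n^{a}$. If $d=d(\varepsilon,K,r)>0$ is sufficiently large, then with probability $1-\exp(-\Omega(n))$ there does not exist a sequence of sets $S_1,\dots,S_K\subseteq[n]$ satisfying: (H1) for each $k\in[K]$ there exists $0\le t_k\le T$ such that $S_k$ is an independent set in $A^{(t_k)}$; (H2) $|S_k|\ge(1+\varepsilon)\left(\frac{1}{r-1}\cdot\frac{\log d}{d}\right)^{1/(r-1)}n$ for all $k\in[K]$; (H3) for all $2\le k\le K$, $\big|S_k\setminus\bigcup_{\ell<k}S_\ell\big|\in\left[\frac\varepsilon4\left(\frac{1}{r-1}\cdot\frac{\log d}{d}\right)^{1/(r-1)}n,\ \frac\varepsilon2\left(\frac{1}{r-1}\cdot\frac{\log d}{d}\right)^{1/(r-1)}n\right]$.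
   Context: $\mathcal{H}_r(n,p)$: random $r$-uniform hypergraph on $[n]$, each $r$-subset an edge independently with probability $p$, encoded by $A\in\{0,1\}^m$, $m=\binom nr$, with coordinates indexed by $[m]$ in a fixed order. Interpolation path of length $T$: $A^{(0)}\sim\mathcal{H}_r(n,p)$, and for $1\le t\le T$, $A^{(t)}$ is obtained from $A^{(t-1)}$ by resampling coordinate $\sigma(t)$ independently from $\mathrm{Ber}(p)$, where $\sigma(t)\in[m]$ is the unique element with $\sigma(t)\equiv t\pmod m$. A set is an independent set in $A^{(t)}$ if it contains no edge of the hypergraph encoded by $A^{(t)}$. *)

theory Defs
  imports "HOL-Probability.Probability"
begin

text \<open>A fixed order of the
  r-subsets of [n] is a bijection ord from {1..m} onto the r-subsets of {1..n};
  coordinate i encodes the potential edge ord i.\<close>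

definition rsubsets :: "nat \<Rightarrow> nat \<Rightarrow> nat set set" where
  "rsubsets n r = {e. e \<subseteq> {1..n} \<and> card e = r}"

definition is_order :: "nat \<Rightarrow> nat \<Rightarrow> (nat \<Rightarrow> nat set) \<Rightarrow> bool" where
  "is_order n r ord \<longleftrightarrow> bij_betw ord {1..n choose r} (rsubsets n r)"

definition sigma :: "nat \<Rightarrow> nat \<Rightarrow> nat" where
  "sigma m t = (if t mod m = 0 then m else t mod m)"

text \<open>The randomness: W :: nat => bool, with W 1..W m the initial coordinates of A^(0)
  and W (m+t) the fresh Ber(p) value used at resampling step t (1 <= t <= T).\<close>
fun path :: "nat \<Rightarrow> (nat \<Rightarrow> bool) \<Rightarrow> nat \<Rightarrow> (nat \<Rightarrow> bool)" where
  "path m W 0 = (\<lambda>i. if i \<in> {1..m} then W i else False)"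
| "path m W (Suc t) = (path m W t)(sigma m (Suc t) := W (m + Suc t))"

definition path_noise :: "nat \<Rightarrow> nat \<Rightarrow> real \<Rightarrow> (nat \<Rightarrow> bool) pmf" where
  "path_noise m T p = Pi_pmf {1..m+T} False (\<lambda>_. bernoulli_pmf p)"

definition indep_in :: "nat \<Rightarrow> (nat \<Rightarrow> nat set) \<Rightarrow> (nat \<Rightarrow> bool) \<Rightarrow> nat set \<Rightarrow> bool" where
  "indep_in m ord A S \<longleftrightarrow> (\<forall>i\<in>{1..m}. A i \<longrightarrow> \<not> ord i \<subseteq> S)"

definition alpha :: "nat \<Rightarrow> real \<Rightarrow> real" where
  "alpha r d = ((1 / (real r - 1)) * (ln d / d)) powr (1 / (real r - 1))"

definition bad_seq ::
  "nat \<Rightarrow> nat \<Rightarrow> (nat \<Rightarrow> nat set) \<Rightarrow> nat \<Rightarrow> real \<Rightarrow> real \<Rightarrow> nat \<Rightarrow> (nat \<Rightarrow> bool) \<Rightarrow> bool" where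
  "bad_seq n r ord T d \<epsilon> K W \<longleftrightarrow>
     (\<exists>S :: nat \<Rightarrow> nat set.
        (\<forall>k\<in>{1..K}. S k \<subseteq> {1..n}) \<and>
        (\<forall>k\<in>{1..K}. \<exists>t\<le>T. indep_in (n choose r) ord (path (n choose r) W t) (S k)) \<and>
        (\<forall>k\<in>{1..K}. real (card (S k)) \<ge> (1 + \<epsilon>) * alpha r d * real n) \<and>
        (\<forall>k\<in>{2..K}.
           \<epsilon> / 4 * alpha r d * real n \<le> real (card (S k - (\<Union>l\<in>{1..<k}. S l))) \<and>
           real (card (S k - (\<Union>l\<in>{1..<k}. S l))) \<le> \<epsilon> / 2 * alpha r d * real n))"

end

theory Submission
  imports Defs "HOL-Real_Asymp.Real_Asymp"
begin

fun fidx :: "nat \<Rightarrow> nat \<Rightarrow> nat \<Rightarrow> nat" where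
  "fidx m 0 i = i"
| "fidx m (Suc t) i = (if i = sigma m (Suc t) then m + Suc t else fidx m t i)"

definition gco :: "nat \<Rightarrow> nat \<Rightarrow> nat" where
  "gco m j = (if j \<le> m then j else sigma m (j - m))"

lemma sigma_range: "m \<ge> 1 \<Longrightarrow> sigma m t \<in> {1..m}"
  unfolding sigma_def using mod_less_divisor[of m t] by auto

lemma path_fidx: "i \<in> {1..m} \<Longrightarrow> path m W t i = W (fidx m t i)"
  by (induction t) auto

lemma gco_fidx: "m \<ge> 1 \<Longrightarrow> i \<in> {1..m} \<Longrightarrow> gco m (fidx m t i) = i"
proof (induction t)
  case 0 then show ?case by (simp add: gco_def)
next
  case (Suc t) then show ?case by (auto simp: gco_def)
qed

lemma fidx_range: "i \<in> {1..m} \<Longrightarrow> fidx m t i \<in> {1..m+t}"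
  by (induction t) auto


lemma prob_allfalse:
  assumes "finite A" "J \<subseteq> A" "0 \<le> p" "p \<le> 1"
  shows "measure_pmf.prob (Pi_pmf A False (\<lambda>_. bernoulli_pmf p)) {W. \<forall>j\<in>J. \<not> W j} = (1-p) ^ card J"
proof -
  have eq: "{W. \<forall>j\<in>J. \<not> W j} = Pi A (\<lambda>j. if j \<in> J then {False} else UNIV)"
    using assms(2) by (auto simp: Pi_def)
  have "measure_pmf.prob (Pi_pmf A False (\<lambda>_. bernoulli_pmf p)) (Pi A (\<lambda>j. if j \<in> J then {False} else UNIV))
     = (\<Prod>x\<in>A. measure_pmf.prob (bernoulli_pmf p) (if x \<in> J then {False} else UNIV))"
    by (rule measure_Pi_pmf_Pi[OF assms(1)])
  also have "\<dots> = (\<Prod>x\<in>A. if x \<in> J then 1 - p else 1)"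
    by (intro prod.cong refl) (use assms in \<open>auto simp: measure_pmf_single\<close>)
  also have "\<dots> = (\<Prod>x\<in>J. 1 - p)"
    using assms(1,2) by (simp add: prod.If_cases Int_absorb1)
  finally show ?thesis using eq by simp
qed


definition UnS :: "(nat \<Rightarrow> nat set) \<Rightarrow> nat \<Rightarrow> nat set" where
  "UnS S k = (\<Union>l\<in>{1..<k}. S l)"

definition Enew :: "nat \<Rightarrow> (nat \<Rightarrow> nat set) \<Rightarrow> nat \<Rightarrow> nat set set" where
  "Enew r S k = {e. e \<subseteq> S k \<and> card e = r \<and> \<not> e \<subseteq> UnS S k}"

lemma Enew_disj: "k < l \<Longrightarrow> 1 \<le> k \<Longrightarrow> Enew r S k \<inter> Enew r S l = {}"
  unfolding Enew_def UnS_def by auto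

lemma event_bound:
  assumes ord: "is_order n r ord" and m: "m = n choose r" "m \<ge> 1"
    and S: "\<forall>k\<in>{1..K}. S k \<subseteq> {1..n}" and tt: "\<forall>k\<in>{1..K}. tt k \<le> T"
    and p: "0 \<le> p" "p \<le> 1"
  shows "measure_pmf.prob (path_noise m T p) {W. \<forall>k\<in>{1..K}. indep_in m ord (path m W (tt k)) (S k)}
     \<le> (1-p) ^ (\<Sum>k\<in>{1..K}. card (Enew r S k))"
proof -
  define I where "I k = {i\<in>{1..m}. ord i \<in> Enew r S k}" for k
  define J where "J = (\<Union>k\<in>{1..K}. fidx m (tt k) ` I k)"
  have bij: "bij_betw ord {1..m} (rsubsets n r)" using ord m unfolding is_order_def by simp
  have sub: "{W. \<forall>k\<in>{1..K}. indep_in m ord (path m W (tt k)) (S k)} \<subseteq> {W. \<forall>j\<in>J. \<not> W j}"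
  proof (clarify)
    fix W j assume H: "\<forall>k\<in>{1..K}. indep_in m ord (path m W (tt k)) (S k)" and j: "j \<in> J" and Wj: "W j"
    from j obtain k i where k: "k \<in> {1..K}" and i: "i \<in> I k" and ji: "j = fidx m (tt k) i"
      unfolding J_def by auto
    have i1: "i \<in> {1..m}" and e: "ord i \<subseteq> S k" using i unfolding I_def Enew_def by auto
    have "path m W (tt k) i" using Wj ji path_fidx[OF i1] by simp
    with H k i1 e show False unfolding indep_in_def by blast
  qed
  have Jsub: "J \<subseteq> {1..m+T}"
  proof
    fix j assume "j \<in> J"
    then obtain k i where k: "k \<in> {1..K}" and i: "i \<in> {1..m}" and ji: "j = fidx m (tt k) i"
      unfolding J_def I_def by auto
    have "fidx m (tt k) i \<in> {1..m + tt k}" by (rule fidx_range[OF i])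
    moreover have "tt k \<le> T" using tt k by blast
    ultimately show "j \<in> {1..m+T}" using ji by auto
  qed
  have finI: "finite (I k)" for k unfolding I_def by auto
  have injk: "inj_on (fidx m (tt k)) (I k)" for k
    by (rule inj_onI) (metis I_def gco_fidx m(2) mem_Collect_eq)
  have cardI: "card (I k) = card (Enew r S k)" if k: "k \<in> {1..K}" for k
  proof -
    have "S k \<subseteq> {1..n}" using S k by blast
    then have "Enew r S k \<subseteq> rsubsets n r" unfolding Enew_def rsubsets_def by auto
    then have "ord ` I k = Enew r S k" using bij unfolding I_def bij_betw_def
      by (smt (verit, best) image_iff mem_Collect_eq subset_antisym subset_iff)
    moreover have "inj_on ord (I k)" using bij unfolding I_def bij_betw_def by (auto intro: inj_on_subset)
    ultimately show ?thesis using card_image by metis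
  qed
  have cardJ: "card J = (\<Sum>k\<in>{1..K}. card (Enew r S k))"
  proof -
    have "card J = (\<Sum>k\<in>{1..K}. card (fidx m (tt k) ` I k))"
      unfolding J_def
    proof (rule card_UN_disjoint)
      show "finite {1..K}" by simp
      show "\<forall>k\<in>{1..K}. finite (fidx m (tt k) ` I k)" using finI by auto
      show "\<forall>k\<in>{1..K}. \<forall>l\<in>{1..K}. k \<noteq> l \<longrightarrow> fidx m (tt k) ` I k \<inter> fidx m (tt l) ` I l = {}"
      proof (intro ballI impI)
        fix k l assume k: "k \<in> {1..K}" and l: "l \<in> {1..K}" and kl: "k \<noteq> l"
        show "fidx m (tt k) ` I k \<inter> fidx m (tt l) ` I l = {}"
        proof (rule ccontr)
          assume "fidx m (tt k) ` I k \<inter> fidx m (tt l) ` I l \<noteq> {}"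
          then obtain i i' where i: "i \<in> I k" and i': "i' \<in> I l" and eq: "fidx m (tt k) i = fidx m (tt l) i'"
            by auto
          have "i = i'" using eq gco_fidx[OF m(2)] i i' unfolding I_def by (metis (no_types, lifting) mem_Collect_eq)
          then have "ord i \<in> Enew r S k \<inter> Enew r S l" using i i' unfolding I_def by auto
          moreover have "Enew r S k \<inter> Enew r S l = {}"
            using Enew_disj[of k l r S] Enew_disj[of l k r S] kl k l by (cases "k < l") (auto simp: Int_commute)
          ultimately show False by auto
        qed
      qed
    qed
    also have "\<dots> = (\<Sum>k\<in>{1..K}. card (Enew r S k))"
      by (intro sum.cong refl) (simp add: card_image[OF injk] cardI)
    finally show ?thesis .
  qed
  have "measure_pmf.prob (path_noise m T p) {W. \<forall>k\<in>{1..K}. indep_in m ord (path m W (tt k)) (S k)}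
      \<le> measure_pmf.prob (path_noise m T p) {W. \<forall>j\<in>J. \<not> W j}"
    by (rule measure_pmf.finite_measure_mono[OF sub]) simp
  also have "\<dots> = (1-p) ^ card J"
    unfolding path_noise_def by (rule prob_allfalse[OF _ Jsub p]) simp
  finally show ?thesis using cardJ by simp
qed


lemma Enew_1: "r \<ge> 1 \<Longrightarrow> finite (S 1) \<Longrightarrow> card (Enew r S 1) = card (S 1) choose r"
proof -
  assume r: "r \<ge> 1" and f: "finite (S 1)"
  have "Enew r S 1 = {e. e \<subseteq> S 1 \<and> card e = r}"
    unfolding Enew_def UnS_def using r by auto
  then show ?thesis using n_subsets[OF f] by simp
qed

lemma Enew_k:
  assumes r: "r \<ge> 1" and f: "finite (S k)"
  shows "card (S k - UnS S k) * (card (S k \<inter> UnS S k) choose (r - 1)) \<le> card (Enew r S k)"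
proof -
  define N where "N = S k - UnS S k"
  define Ob where "Ob = S k \<inter> UnS S k"
  define RR where "RR = {R. R \<subseteq> Ob \<and> card R = r - 1}"
  have fN: "finite N" "finite Ob" using f unfolding N_def Ob_def by auto
  have cRR: "card RR = card Ob choose (r - 1)" unfolding RR_def using n_subsets[OF fN(2)] by simp
  have inj: "inj_on (\<lambda>(v, R). insert v R) (N \<times> RR)"
  proof (rule inj_onI, clarify)
    fix v R v' R' assume v: "v \<in> N" "R \<in> RR" "v' \<in> N" "R' \<in> RR" and eq: "insert v R = insert v' R'"
    have vO: "v \<notin> Ob" "v' \<notin> Ob" using v unfolding N_def Ob_def by auto
    have RO: "R \<subseteq> Ob" "R' \<subseteq> Ob" using v unfolding RR_def by auto
    have "v = v'" using eq vO RO by (metis insertE insertI1 subsetD)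
    moreover have "R = R'" using eq vO RO calculation by (metis Diff_insert_absorb subsetD)
    ultimately show "v = v' \<and> R = R'" by simp
  qed
  have img: "(\<lambda>(v, R). insert v R) ` (N \<times> RR) \<subseteq> Enew r S k"
  proof clarify
    fix v R assume v: "v \<in> N" "R \<in> RR"
    have vO: "v \<notin> R" "R \<subseteq> S k" "finite R" using v f unfolding N_def Ob_def RR_def by (auto intro: finite_subset)
    have "card (insert v R) = r" using vO v r unfolding RR_def by auto
    then show "insert v R \<in> Enew r S k" using v vO unfolding Enew_def N_def by auto
  qed
  have fE: "finite (Enew r S k)" unfolding Enew_def using f by (auto intro: finite_subset[of _ "Pow (S k)"])
  have "card N * card RR = card ((\<lambda>(v, R). insert v R) ` (N \<times> RR))"
    by (simp add: card_image[OF inj] card_cartesian_product)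
  also have "\<dots> \<le> card (Enew r S k)" by (rule card_mono[OF fE img])
  finally show ?thesis unfolding N_def Ob_def cRR[unfolded Ob_def] by (simp add: RR_def Ob_def cRR)
qed

lemma choose_lower:
  fixes y k :: nat assumes "k \<le> y"
  shows "(real y - real k) ^ k \<le> real (y choose k) * fact k"
proof -
  have "real (y choose k) = (\<Prod>i=0..<k. real y - real i) / fact k"
    by (simp add: binomial_gbinomial gbinomial_prod_rev)
  then have e: "real (y choose k) * fact k = (\<Prod>i=0..<k. real y - real i)" by simp
  have "(real y - real k) ^ k = (\<Prod>i=0..<k. real y - real k)" by simp
  also have "\<dots> \<le> (\<Prod>i=0..<k. real y - real i)"
    by (rule prod_mono) (use assms in auto)
  finally show ?thesis using e by simp
qed

lemma choose_upper: "real (n choose k) * fact k \<le> real n ^ k"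
proof -
  have "(n choose k) * fact k \<le> n ^ k" by (rule binomial_fact_pow)
  then have "real ((n choose k) * fact k) \<le> real (n ^ k)" by (simp only: of_nat_le_iff)
  then show ?thesis by simp
qed

lemma pow_self_le_fact_exp: "real n ^ n \<le> fact n * exp (real n)"
proof (induction n)
  case 0 then show ?case by simp
next
  case (Suc n)
  have key: "(real n + 1) ^ n \<le> real n ^ n * exp 1"
  proof (cases "n = 0")
    case True then show ?thesis by simp
  next
    case False
    then have np: "real n > 0" by simp
    have "(real n + 1) ^ n = real n ^ n * (1 + 1 / real n) ^ n"
      using np by (simp add: field_simps flip: power_mult_distrib)
    also have "(1 + 1 / real n) ^ n \<le> exp (1 / real n) ^ n"
      by (rule power_mono) (use exp_ge_add_one_self[of "1 / real n"] in auto)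
    also have "exp (1 / real n) ^ n = exp 1" using np by (simp add: exp_of_nat_mult[symmetric])
    finally show ?thesis using np by (simp add: mult_left_mono)
  qed
  have "real (Suc n) ^ Suc n = (real n + 1) * (real n + 1) ^ n" by (simp add: algebra_simps)
  also have "\<dots> \<le> (real n + 1) * (real n ^ n * exp 1)" by (rule mult_left_mono[OF key]) simp
  also have "\<dots> \<le> (real n + 1) * (fact n * exp (real n) * exp 1)"
    by (intro mult_left_mono mult_right_mono Suc.IH) auto
  also have "\<dots> = fact (Suc n) * exp (real (Suc n))" by (simp add: exp_add algebra_simps)
  finally show ?case .
qed

lemma choose_exp_bound:
  assumes "x \<ge> 1" "n \<ge> 1"
  shows "real (n choose x) \<le> exp (real x * (1 + ln (real n) - ln (real x)))"
proof -
  have xp: "real x > 0" "real n > 0" using assms by auto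
  have "real (n choose x) \<le> real n ^ x / fact x"
    using choose_upper[of n x] by (simp add: field_simps)
  also have "\<dots> \<le> real n ^ x * exp (real x) / real x ^ x"
  proof -
    have "real x ^ x \<le> fact x * exp (real x)" by (rule pow_self_le_fact_exp)
    then show ?thesis using xp by (simp add: field_simps)
  qed
  also have "\<dots> = exp (real x * (1 + ln (real n) - ln (real x)))"
  proof -
    have a: "exp (real x * ln (real n)) = real n ^ x" using xp by (simp add: exp_of_nat_mult exp_ln)
    have b: "exp (real x * ln (real x)) = real x ^ x" using xp by (simp add: exp_of_nat_mult exp_ln)
    show ?thesis by (simp add: exp_add exp_diff ring_distribs a b)
  qed
  finally show ?thesis .
qed


lemma pow_ge_1plus: fixes t :: real assumes "t \<ge> 0" "k \<ge> 1" shows "1 + t ^ k \<le> (1 + t) ^ k"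
  using assms(2)
proof (induction k rule: dec_induct)
  case base then show ?case by simp
next
  case (step k)
  have "1 + t ^ Suc k \<le> (1 + t) * (1 + t ^ k)" using assms(1) by (simp add: algebra_simps)
  also have "\<dots> \<le> (1 + t) * (1 + t) ^ k" by (rule mult_left_mono[OF step.IH]) (use assms in auto)
  finally show ?case by simp
qed

lemma pow_ge_quad: fixes u :: real assumes "u \<ge> 0" "k \<ge> 2"
  shows "1 + real k * u + u^2 \<le> (1 + u) ^ k"
  using assms(2)
proof (induction k rule: dec_induct)
  case base then show ?case by (simp add: power2_eq_square algebra_simps)
next
  case (step k)
  have "1 + real (Suc k) * u + u^2 \<le> (1 + u) * (1 + real k * u + u^2)"
    using assms(1) by (simp add: algebra_simps power2_eq_square)
  also have "\<dots> \<le> (1 + u) * (1 + u) ^ k" by (rule mult_left_mono[OF step.IH]) (use assms in auto)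
  finally show ?case by simp
qed

lemma core_A:
  fixes \<sigma> :: real and r :: nat
  assumes r: "r \<ge> 2" and s: "\<sigma> \<ge> 1"
  shows "\<sigma> * (1 + 1/(32*real r)) - (1 - 1/(32*real r)) * \<sigma>^r / real r \<le> 1 - 7/(8*real r)"
proof -
  define u where "u = \<sigma> - 1"
  define R where "R = real r"
  have u: "u \<ge> 0" using s u_def by simp
  have R: "R \<ge> 2" using r R_def by simp
  have q: "1 + R * u + u^2 \<le> \<sigma>^r" using pow_ge_quad[OF u r] unfolding u_def R_def by simp
  define \<delta> where "\<delta> = 1 / (32 * R)"
  have d: "\<delta> > 0" "R * \<delta> = 1/32" "\<delta> \<le> 1/64" using R unfolding \<delta>_def by (auto simp: field_simps)
  have "R * (\<sigma> * (1 + \<delta>)) - (1 - \<delta>) * \<sigma>^r \<le> R * (\<sigma> * (1 + \<delta>)) - (1 - \<delta>) * (1 + R * u + u^2)"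
    using q d by (intro diff_left_mono mult_left_mono) auto
  also have "\<dots> = R - 1 + R*\<delta> + \<delta> + 2*(R*\<delta>)*u - (1-\<delta>)*u^2"
    unfolding u_def by (simp add: algebra_simps power2_eq_square)
  also have "\<dots> \<le> R - 7/8"
  proof -
    have a: "u^2 \<ge> u/8 - 1/256" using zero_le_power2[of "u - 1/16"] by (simp add: power2_eq_square algebra_simps)
    have b: "(1-\<delta>)*u^2 \<ge> (63/64)*u^2" using d by (intro mult_right_mono) auto
    have c: "2*(R*\<delta>)*u = u/16" using d by simp
    show ?thesis using a b d c u by linarith
  qed
  finally have main: "R * (\<sigma> * (1 + \<delta>)) - (1 - \<delta>) * \<sigma>^r \<le> R - 7/8" .
  have "\<sigma> * (1 + \<delta>) - (1 - \<delta>) * \<sigma>^r / R = (R * (\<sigma> * (1 + \<delta>)) - (1 - \<delta>) * \<sigma>^r) / R"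
    using R by (simp add: field_simps)
  also have "\<dots> \<le> (R - 7/8) / R" using main R by (intro divide_right_mono) auto
  also have "\<dots> = 1 - 7/(8*R)" using R by (simp add: field_simps)
  finally show ?thesis unfolding \<delta>_def R_def .
qed


lemma two_pow_le_exp: "(2::real) ^ j \<le> exp (real j)"
proof -
  have "(2::real) ^ j \<le> exp 1 ^ j" by (rule power_mono) (use exp_ge_add_one_self[of 1] in auto)
  also have "\<dots> = exp (real j)" by (simp add: exp_of_nat_mult[symmetric])
  finally show ?thesis .
qed

lemma A_size:
  fixes r K n a :: nat and \<alpha> s d L :: real
  assumes r: "r \<ge> 2" and n: "n \<ge> 1" and al: "\<alpha> > 0" and s: "s = \<alpha> * real n" and dp: "d > 0"
    and L: "d * \<alpha> ^ (r - 1) = L" and lnal: "- ln \<alpha> \<le> L"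
    and LK: "L \<ge> 32 * real r * (1 + real K)" and s2: "s \<ge> 32 * real r ^ 3"
    and a: "s \<le> real a" "a \<le> n"
  shows "real (n choose a) * 2 ^ ((K - 1) * a) * exp (- (d * (real a - real r) ^ r / (real r * real n ^ (r - 1))))
         \<le> exp (s * L * (1 - 7 / (8 * real r)))"
proof -
  define R where "R = real r"
  have R: "R \<ge> 2" using r R_def by simp
  have R3: "R^3 \<ge> 1" using R by (simp add: one_le_power)
  have sp: "s \<ge> 32" using s2 R3 unfolding R_def by linarith
  have a1: "a \<ge> 1" using a sp by linarith
  have ap: "real a > 0" using a1 by simp
  have Lp: "L > 0"
  proof -
    have "32 * real r * (1 + real K) > 0" using r by simp
    then show ?thesis using LK by linarith
  qed
  define \<sigma> where "\<sigma> = real a / s"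
  have sps: "s > 0" using sp by simp
  have sig1: "\<sigma> \<ge> 1" using a(1) sps unfolding \<sigma>_def by simp
  have aeq: "real a = \<sigma> * s" using sps unfolding \<sigma>_def by simp
  have lnb: "ln (real n) - ln (real a) \<le> L"
  proof -
    have "ln s \<le> ln (real a)" using a(1) sps by simp
    moreover have "ln s = ln \<alpha> + ln (real n)" using s al n by (simp add: ln_mult)
    ultimately show ?thesis using lnal by linarith
  qed
  have cb: "real (n choose a) \<le> exp (real a * (1 + ln (real n) - ln (real a)))"
    by (rule choose_exp_bound) (use a1 n in auto)
  also have "\<dots> \<le> exp (real a * (1 + L))"
    using lnb ap by (intro exp_mono mult_left_mono) auto
  finally have cb2: "real (n choose a) \<le> exp (real a * (1 + L))" .
  have tb: "(2::real) ^ ((K - 1) * a) \<le> exp (real K * real a)"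
  proof -
    have "(2::real) ^ ((K - 1) * a) \<le> exp (real ((K - 1) * a))" by (rule two_pow_le_exp)
    also have "\<dots> \<le> exp (real K * real a)"
    proof -
      have "(K - 1) * a \<le> K * a" by simp
      then have "real ((K - 1) * a) \<le> real K * real a" by (metis of_nat_le_iff of_nat_mult)
      then show ?thesis by simp
    qed
    finally show ?thesis .
  qed
  define \<delta> where "\<delta> = 1 / (32 * R)"
  have dlt: "\<delta> > 0" "\<delta> \<le> 1/64" using R unfolding \<delta>_def by (auto simp: field_simps)
  have pen1: "(real a - R) ^ r \<ge> (1 - \<delta>) * real a ^ r"
  proof -
    have "R * R \<ge> 1 * 1" using R by (intro mult_mono) auto
    then have "R * 1 \<le> R * (R * R)" using R by (intro mult_left_mono) auto
    then have "R \<le> R^3" by (simp add: power3_eq_cube)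
    then have "R \<le> real a" using a(1) s2 unfolding R_def by linarith
    then have "R / real a \<le> 1" using ap by simp
    have Ra: "R * R / real a \<le> \<delta>"
    proof -
      have "R * R * (32 * R) \<le> real a" using a(1) s2 unfolding R_def by (simp add: power3_eq_cube algebra_simps)
      then show ?thesis unfolding \<delta>_def using ap R by (simp add: field_simps)
    qed
    have b: "1 + real r * (- (R / real a)) \<le> (1 + (- (R / real a))) ^ r"
      by (rule Bernoulli_inequality) (use \<open>R / real a \<le> 1\<close> in auto)
    have "(real a - R) ^ r = real a ^ r * (1 - R / real a) ^ r"
    proof -
      have "real a - R = real a * (1 - R / real a)" using ap by (simp add: right_diff_distrib)
      then show ?thesis by (simp only: power_mult_distrib)
    qed
    moreover have X: "(1 - R / real a) ^ r \<ge> 1 - \<delta>"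
    proof -
      have e: "real r * (R / real a) = R * R / real a" unfolding R_def by simp
      have b': "1 - real r * (R / real a) \<le> (1 - R / real a) ^ r" using b by (metis diff_conv_add_uminus mult_minus_right)
      show ?thesis using b' Ra e by linarith
    qed
    moreover have "real a ^ r * (1 - \<delta>) \<le> real a ^ r * (1 - R / real a) ^ r"
      by (rule mult_left_mono[OF X]) (use ap in simp)
    moreover have "(1 - \<delta>) * real a ^ r = real a ^ r * (1 - \<delta>)" by (rule mult.commute)
    ultimately show ?thesis by linarith
  qed
  have aeq2: "d * real a ^ r / real n ^ (r - 1) = s * \<sigma> ^ r * L"
  proof -
    have p1: "real a ^ r = \<sigma> ^ r * s ^ r" unfolding aeq by (rule power_mult_distrib)
    have rr: "Suc (r - 1) = r" using r by simp
    have p2: "s ^ r = s ^ (r - 1) * s" using power_Suc2[of s "r - 1"] unfolding rr .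
    have p3: "s ^ (r - 1) = \<alpha> ^ (r - 1) * real n ^ (r - 1)" unfolding s by (rule power_mult_distrib)
    have "real a ^ r = (\<sigma> ^ r * s * \<alpha> ^ (r - 1)) * real n ^ (r - 1)"
      unfolding p1 p2 p3 by (simp only: ac_simps)
    then have "d * real a ^ r / real n ^ (r - 1) = (d * (\<sigma> ^ r * s * \<alpha> ^ (r - 1))) * real n ^ (r - 1) / real n ^ (r - 1)"
      by (simp only: ac_simps)
    also have "\<dots> = d * (\<sigma> ^ r * s * \<alpha> ^ (r - 1))"
      using n by (intro nonzero_mult_div_cancel_right) simp
    also have "\<dots> = s * \<sigma> ^ r * (d * \<alpha> ^ (r - 1))" by (simp only: ac_simps)
    finally show ?thesis using L by simp
  qed
  have pen: "d * (real a - R) ^ r / (R * real n ^ (r - 1)) \<ge> (1 - \<delta>) * s * \<sigma> ^ r * L / R"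
  proof -
    have "(1 - \<delta>) * s * \<sigma> ^ r * L / R = (1 - \<delta>) * (d * real a ^ r / real n ^ (r - 1)) / R"
      unfolding aeq2 by (simp only: ac_simps)
    also have "\<dots> \<le> d * (real a - R) ^ r / real n ^ (r - 1) / R"
    proof (rule divide_right_mono)
      have "(1 - \<delta>) * (d * real a ^ r / real n ^ (r - 1)) = d * ((1 - \<delta>) * real a ^ r) / real n ^ (r - 1)" by (simp only: times_divide_eq_right ac_simps)
      also have "\<dots> \<le> d * (real a - R) ^ r / real n ^ (r - 1)"
        using pen1 dp by (intro divide_right_mono mult_left_mono) auto
      finally show "(1 - \<delta>) * (d * real a ^ r / real n ^ (r - 1)) \<le> d * (real a - R) ^ r / real n ^ (r - 1)" .
    qed (use R in auto)
    finally show ?thesis by (simp add: mult.commute)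
  qed
  have core: "\<sigma> * (1 + \<delta>) - (1 - \<delta>) * \<sigma>^r / R \<le> 1 - 7/(8*R)"
    using core_A[OF r sig1] unfolding \<delta>_def R_def .
  have bK: "(1 + real K) / L \<le> \<delta>"
  proof -
    have "(1 + real K) * (32 * R) \<le> L" using LK unfolding R_def by (simp add: algebra_simps)
    then show ?thesis unfolding \<delta>_def using Lp R by (simp add: pos_divide_le_eq pos_le_divide_eq mult.commute)
  qed
  have expo: "real a * (1 + L) + real K * real a - d * (real a - R) ^ r / (R * real n ^ (r - 1))
      \<le> s * L * (1 - 7/(8*R))"
  proof -
    have "real a * (1 + L) + real K * real a = s * L * (\<sigma> * (1 + (1 + real K) / L))"
      using Lp unfolding aeq by (simp add: distrib_left add_divide_distrib)
    also have "\<dots> \<le> s * L * (\<sigma> * (1 + \<delta>))"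
      using bK sps Lp sig1 by (intro mult_left_mono) auto
    finally have h1: "real a * (1 + L) + real K * real a \<le> s * L * (\<sigma> * (1 + \<delta>))" .
    have "s * L * (\<sigma> * (1 + \<delta>)) - (1 - \<delta>) * s * \<sigma> ^ r * L / R = s * L * (\<sigma> * (1 + \<delta>) - (1 - \<delta>) * \<sigma>^r / R)"
      by (simp add: algebra_simps)
    also have "\<dots> \<le> s * L * (1 - 7/(8*R))" using core sps Lp by (intro mult_left_mono) auto
    finally show ?thesis using h1 pen by linarith
  qed
  have "real (n choose a) * 2 ^ ((K - 1) * a) * exp (- (d * (real a - R) ^ r / (R * real n ^ (r - 1))))
      \<le> exp (real a * (1 + L)) * exp (real K * real a) * exp (- (d * (real a - R) ^ r / (R * real n ^ (r - 1))))"
    using cb2 tb by (intro mult_right_mono mult_mono) auto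
  also have "\<dots> = exp (real a * (1 + L) + real K * real a - d * (real a - R) ^ r / (R * real n ^ (r - 1)))"
    by (simp only: diff_conv_add_uminus exp_add)
  also have "\<dots> \<le> exp (s * L * (1 - 7/(8*R)))" using expo by simp
  finally show ?thesis unfolding R_def .
qed


lemma N_size:
  fixes r K n x :: nat and \<alpha> s d L \<epsilon> :: real
  assumes r: "r \<ge> 2" and n: "n \<ge> 1" and al: "\<alpha> > 0" and s: "s = \<alpha> * real n" and dp: "d > 0"
    and L: "d * \<alpha> ^ (r - 1) = L" and lnal: "- ln \<alpha> \<le> L" and eps: "\<epsilon> > 0"
    and LN: "L * (\<epsilon>/2) ^ (r - 1) \<ge> 16 * real r * (1 + real K + \<bar>ln (4/\<epsilon>)\<bar>)"
    and s3: "s \<ge> 32 * real r ^ 3 / \<epsilon>" and x: "\<epsilon> * s / 4 \<le> real x"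
  shows "real (n choose x) * 2 ^ ((K - 1) * x) * exp (- (real x * (d * ((1 + \<epsilon>/2) * s - real r) ^ (r - 1) / real n ^ (r - 1))))
         \<le> exp (- (\<epsilon> * s / 4 * L * (\<epsilon>/2) ^ (r - 1) * (1 - 1 / (8 * real r))))"
proof -
  define R where "R = real r"
  define g where "g = (\<epsilon>/2) ^ (r - 1)"
  define C1 where "C1 = 1 + real K + \<bar>ln (4/\<epsilon>)\<bar>"
  have R: "R \<ge> 2" using r R_def by simp
  have gp: "g > 0" unfolding g_def using eps by simp
  have C1p: "C1 \<ge> 1" unfolding C1_def by simp
  have LgC: "L * g \<ge> 16 * R * C1" using LN unfolding g_def R_def C1_def .
  have Lgp: "L * g > 0"
  proof -
    have "16 * R * C1 > 0" using R C1p by simp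
    then show ?thesis using LgC by linarith
  qed
  have Lp: "L > 0" using Lgp gp by (simp add: zero_less_mult_iff)
  have R3: "R ^ 3 > 0" using R by simp
  have sps: "s > 0"
  proof -
    have "32 * R ^ 3 / \<epsilon> > 0" using R3 eps by simp
    then show ?thesis using s3 unfolding R_def by linarith
  qed
  have xp: "real x > 0"
  proof -
    have "\<epsilon> * s / 4 > 0" using eps sps by simp
    then show ?thesis using x by linarith
  qed
  then have x1: "x \<ge> 1" by simp
  have lnb: "ln (real n) - ln (real x) \<le> \<bar>ln (4/\<epsilon>)\<bar> + L"
  proof -
    have pos: "\<epsilon> * s / 4 > 0" using eps sps by simp
    have "ln (\<epsilon> * s / 4) \<le> ln (real x)" using x pos xp by (subst ln_le_cancel_iff) auto
    moreover have "ln (\<epsilon> * s / 4) = ln (\<epsilon> / 4) + ln \<alpha> + ln (real n)"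
      unfolding s using eps al n by (simp add: ln_mult ln_div)
    moreover have "ln (\<epsilon> / 4) = - ln (4 / \<epsilon>)" using eps by (simp add: ln_div)
    ultimately show ?thesis using lnal by linarith
  qed
  have cb: "real (n choose x) \<le> exp (real x * (1 + ln (real n) - ln (real x)))"
    by (rule choose_exp_bound) (use x1 n in auto)
  also have "\<dots> \<le> exp (real x * (1 + \<bar>ln (4/\<epsilon>)\<bar> + L))"
    using lnb xp by (intro exp_mono mult_left_mono) auto
  finally have cb2: "real (n choose x) \<le> exp (real x * (1 + \<bar>ln (4/\<epsilon>)\<bar> + L))" .
  have tb: "(2::real) ^ ((K - 1) * x) \<le> exp (real K * real x)"
  proof -
    have "(2::real) ^ ((K - 1) * x) \<le> exp (real ((K - 1) * x))" by (rule two_pow_le_exp)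
    also have "\<dots> \<le> exp (real K * real x)"
    proof -
      have "(K - 1) * x \<le> K * x" by simp
      then have "real ((K - 1) * x) \<le> real K * real x" by (metis of_nat_le_iff of_nat_mult)
      then show ?thesis by simp
    qed
    finally show ?thesis .
  qed
  define t where "t = 1 + \<epsilon>/2 - R / s"
  define \<eta> where "\<eta> = 1 / (16 * R^2)"
  have R2: "R^2 \<ge> 4" using R power_mono[OF R, of 2] by simp
  have etap: "\<eta> > 0" "\<eta> \<le> 1"
  proof -
    have "16 * R^2 \<ge> 1" using R2 by simp
    then show "\<eta> > 0" "\<eta> \<le> 1" unfolding \<eta>_def by (auto simp: divide_le_eq_1)
  qed
  have Rs: "R / s \<le> (\<epsilon>/2) * \<eta>"
  proof -
    have "32 * R ^ 3 \<le> s * \<epsilon>" using s3 eps unfolding R_def by (simp add: pos_divide_le_eq)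
    then have "R * (32 * R^2) \<le> s * \<epsilon>" by (simp add: power3_eq_cube power2_eq_square ac_simps)
    then show ?thesis unfolding \<eta>_def using sps R by (simp add: pos_divide_le_eq field_simps)
  qed
  have tge: "t \<ge> 1 + (\<epsilon>/2) * (1 - \<eta>)" unfolding t_def using Rs by (simp add: right_diff_distrib)
  have Qeq: "d * ((1 + \<epsilon>/2) * s - R) ^ (r - 1) / real n ^ (r - 1) = L * t ^ (r - 1)"
  proof -
    have e1: "(1 + \<epsilon>/2) * s - R = s * t" unfolding t_def using sps by (simp add: algebra_simps)
    have e2: "(s * t) ^ (r - 1) = (t ^ (r - 1) * \<alpha> ^ (r - 1)) * real n ^ (r - 1)"
      unfolding s by (simp only: power_mult_distrib ac_simps)
    have "d * ((1 + \<epsilon>/2) * s - R) ^ (r - 1) / real n ^ (r - 1) = (d * (t ^ (r - 1) * \<alpha> ^ (r - 1))) * real n ^ (r - 1) / real n ^ (r - 1)"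
      unfolding e1 e2 by (simp only: ac_simps times_divide_eq_right)
    also have "\<dots> = d * (t ^ (r - 1) * \<alpha> ^ (r - 1))"
      using n by (intro nonzero_mult_div_cancel_right) simp
    also have "\<dots> = (d * \<alpha> ^ (r - 1)) * t ^ (r - 1)" by (simp only: ac_simps)
    finally show ?thesis using L by simp
  qed
  have r1: "r - 1 \<ge> 1" using r by simp
  have tpow: "t ^ (r - 1) \<ge> 1 + g * (1 - 1/(16*R))"
  proof -
    have z: "(\<epsilon>/2) * (1 - \<eta>) \<ge> 0" using eps etap by simp
    have "(1 + (\<epsilon>/2) * (1 - \<eta>)) ^ (r - 1) \<le> t ^ (r - 1)"
      using tge z by (intro power_mono) auto
    moreover have "1 + ((\<epsilon>/2) * (1 - \<eta>)) ^ (r - 1) \<le> (1 + (\<epsilon>/2) * (1 - \<eta>)) ^ (r - 1)"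
      by (rule pow_ge_1plus[OF z r1])
    moreover have "((\<epsilon>/2) * (1 - \<eta>)) ^ (r - 1) = g * (1 - \<eta>) ^ (r - 1)"
      unfolding g_def by (rule power_mult_distrib)
    moreover have "(1 - \<eta>) ^ (r - 1) \<ge> 1 - 1/(16*R)"
    proof -
      have b: "1 + real (r - 1) * (- \<eta>) \<le> (1 + (- \<eta>)) ^ (r - 1)"
        by (rule Bernoulli_inequality) (use etap in auto)
      have "real (r - 1) * \<eta> \<le> R * \<eta>" using etap unfolding R_def by (intro mult_right_mono) auto
      moreover have "R * \<eta> = 1/(16*R)" unfolding \<eta>_def using R by (simp add: power2_eq_square)
      ultimately show ?thesis using b by simp
    qed
    moreover have "g * (1 - 1/(16*R)) \<le> g * (1 - \<eta>) ^ (r - 1)"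
      using calculation(4) gp by (intro mult_left_mono) auto
    ultimately show ?thesis by linarith
  qed
  have expo: "real x * (1 + \<bar>ln (4/\<epsilon>)\<bar> + L) + real K * real x - real x * (L * t ^ (r - 1))
      \<le> - (\<epsilon> * s / 4 * L * g * (1 - 1 / (8 * R)))"
  proof -
    have "real x * (L * t ^ (r - 1)) \<ge> real x * (L * (1 + g * (1 - 1/(16*R))))"
      using tpow Lp xp by (intro mult_left_mono) auto
    moreover have "real x * (1 + \<bar>ln (4/\<epsilon>)\<bar> + L) + real K * real x = real x * (C1 + L)"
      unfolding C1_def by (simp add: algebra_simps)
    moreover have "real x * (C1 + L) - real x * (L * (1 + g * (1 - 1/(16*R)))) = real x * (C1 - L * g * (1 - 1/(16*R)))"
      by (simp add: algebra_simps)
    moreover have "C1 - L * g * (1 - 1/(16*R)) \<le> - (L * g * (1 - 1/(8*R)))"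
    proof -
      have f1: "C1 \<le> L * g / (16 * R)" using LgC R by (simp add: pos_le_divide_eq ac_simps)
      have f2: "L * g * (1 - 1/(16*R)) = L * g - L * g / (16 * R)" by (simp add: algebra_simps)
      have f3: "L * g * (1 - 1/(8*R)) = L * g - 2 * (L * g / (16 * R))" by (simp add: algebra_simps)
      have aux: "\<And>C A B P q::real. C \<le> q \<Longrightarrow> A = P - q \<Longrightarrow> B = P - 2*q \<Longrightarrow> C - A \<le> - B" by linarith
      show ?thesis by (rule aux[OF f1 f2 f3])
    qed
    moreover have "real x * (- (L * g * (1 - 1/(8*R)))) \<le> \<epsilon> * s / 4 * (- (L * g * (1 - 1/(8*R))))"
    proof -
      have "1/(8*R) \<le> 1" using R by simp
      then have "L * g * (1 - 1/(8*R)) \<ge> 0" using Lgp by simp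
      then show ?thesis using x by (intro mult_right_mono_neg) auto
    qed
    moreover have "real x * (C1 - L * g * (1 - 1/(16*R))) \<le> real x * (- (L * g * (1 - 1/(8*R))))"
      using calculation(4) xp by (intro mult_left_mono) auto
    moreover have "\<epsilon> * s / 4 * (- (L * g * (1 - 1/(8*R)))) = - (\<epsilon> * s / 4 * L * g * (1 - 1 / (8 * R)))"
      by (simp only: mult_minus_right ac_simps)
    ultimately show ?thesis by linarith
  qed
  have "real (n choose x) * 2 ^ ((K - 1) * x) * exp (- (real x * (d * ((1 + \<epsilon>/2) * s - R) ^ (r - 1) / real n ^ (r - 1))))
      \<le> exp (real x * (1 + \<bar>ln (4/\<epsilon>)\<bar> + L)) * exp (real K * real x) * exp (- (real x * (L * t ^ (r - 1))))"
    unfolding Qeq using cb2 tb by (intro mult_right_mono mult_mono) auto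
  also have "\<dots> = exp (real x * (1 + \<bar>ln (4/\<epsilon>)\<bar> + L) + real K * real x - real x * (L * t ^ (r - 1)))"
    by (simp only: diff_conv_add_uminus exp_add)
  also have "\<dots> \<le> exp (- (\<epsilon> * s / 4 * L * g * (1 - 1 / (8 * R))))" using expo by simp
  finally show ?thesis unfolding R_def g_def .
qed


lemma sum_card_bound:
  fixes f :: "nat \<Rightarrow> real"
  assumes X: "X \<subseteq> Pow {1..n}" and f: "\<And>a. f a \<ge> 0" and B: "B \<ge> 0"
    and bnd: "\<And>A. A \<in> X \<Longrightarrow> real (n choose card A) * f (card A) \<le> B"
  shows "(\<Sum>A\<in>X. f (card A)) \<le> (real n + 1) * B"
proof -
  have finX: "finite X" using X by (rule finite_subset) simp
  have img: "card ` X \<subseteq> {0..n}"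
  proof
    fix a assume "a \<in> card ` X"
    then obtain A where A: "A \<in> X" "a = card A" by auto
    have "card A \<le> card {1..n}" using A X by (intro card_mono) auto
    then show "a \<in> {0..n}" using A by simp
  qed
  have "(\<Sum>A\<in>X. f (card A)) = (\<Sum>a\<in>{0..n}. \<Sum>A\<in>{A. A \<in> X \<and> card A = a}. f (card A))"
    by (rule sum.group[symmetric, OF finX _ img]) simp
  also have "\<dots> \<le> (\<Sum>a\<in>{0..n}. B)"
  proof (rule sum_mono)
    fix a assume "a \<in> {0..n}"
    show "(\<Sum>A\<in>{A. A \<in> X \<and> card A = a}. f (card A)) \<le> B"
    proof (cases "{A. A \<in> X \<and> card A = a} = {}")
      case True then show ?thesis using B by (simp only: True sum.empty)
    next
      case False
      then obtain A0 where A0: "A0 \<in> X" "card A0 = a" by auto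
      have "(\<Sum>A\<in>{A. A \<in> X \<and> card A = a}. f (card A)) = real (card {A. A \<in> X \<and> card A = a}) * f a"
        by simp
      also have "\<dots> \<le> real (n choose a) * f a"
      proof (intro mult_right_mono f)
        have "{A. A \<in> X \<and> card A = a} \<subseteq> {A. A \<subseteq> {1..n} \<and> card A = a}" using X by auto
        then have "card {A. A \<in> X \<and> card A = a} \<le> card {A. A \<subseteq> {1..n} \<and> card A = a}"
          by (intro card_mono) auto
        also have "\<dots> = n choose a" using n_subsets[of "{1..n}" a] by simp
        finally show "real (card {A. A \<in> X \<and> card A = a}) \<le> real (n choose a)" by simp
      qed
      also have "\<dots> \<le> B" using bnd[OF A0(1)] A0(2) by simp
      finally show ?thesis .
    qed
  qed
  also have "\<dots> = (real n + 1) * B" by simp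
  finally show ?thesis .
qed

lemma UnS_sub: "k \<ge> 1 \<Longrightarrow> UnS S k \<subseteq> S 1 \<union> (\<Union>j\<in>{2..<k}. S j - UnS S j)"
proof (induction k rule: dec_induct)
  case base then show ?case by (simp add: UnS_def)
next
  case (step k)
  have u: "UnS S (Suc k) = UnS S k \<union> S k" unfolding UnS_def using step.hyps
    by (auto simp: less_Suc_eq)
  show ?case
  proof
    fix v assume "v \<in> UnS S (Suc k)"
    then have "v \<in> UnS S k \<or> v \<in> S k" using u by auto
    then show "v \<in> S 1 \<union> (\<Union>j\<in>{2..<Suc k}. S j - UnS S j)"
    proof
      assume "v \<in> UnS S k" then show ?thesis using step.IH by auto
    next
      assume vk: "v \<in> S k"
      show ?thesis
      proof (cases "v \<in> UnS S k")
        case True then show ?thesis using step.IH by auto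
      next
        case False
        show ?thesis
        proof (cases "k = 1")
          case True then show ?thesis using vk by simp
        next
          case k: False
          then have "k \<in> {2..<Suc k}" using step.hyps by auto
          then show ?thesis using vk False by blast
        qed
      qed
    qed
  qed
qed


lemma seq_sum_bound:
  fixes K n :: nat and Pa Pn :: "nat \<Rightarrow> bool" and wa wn :: "nat \<Rightarrow> real"
  assumes wa: "\<And>a. wa a \<ge> 0" and wn: "\<And>x. wn x \<ge> 0" and K: "K \<ge> 1"
  shows "(\<Sum>S\<in>{S \<in> PiE {1..K} (\<lambda>_. Pow {1..n}). Pa (card (S 1)) \<and> (\<forall>k\<in>{2..K}. Pn (card (S k - UnS S k)))}.
            wa (card (S 1)) * (\<Prod>k\<in>{2..K}. wn (card (S k - UnS S k))))
       \<le> (\<Sum>A\<in>{A\<in>Pow {1..n}. Pa (card A)}. 2 ^ ((K - 1) * card A) * wa (card A)) *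
          (\<Sum>N\<in>{N\<in>Pow {1..n}. Pn (card N)}. 2 ^ ((K - 1) * card N) * wn (card N)) ^ (K - 1)"
proof -
  define SS where "SS = {S \<in> PiE {1..K} (\<lambda>_. Pow {1..n}). Pa (card (S 1)) \<and> (\<forall>k\<in>{2..K}. Pn (card (S k - UnS S k)))}"
  define AA where "AA = {A\<in>Pow {1..n}. Pa (card A)}"
  define NN where "NN = {N\<in>Pow {1..n}. Pn (card N)}"
  define I2 where "I2 = {2..K}"
  define Base where "Base = AA \<times> PiE I2 (\<lambda>_. NN)"
  define V where "V = (\<lambda>(A::nat set, Nf::nat \<Rightarrow> nat set). A \<union> (\<Union>k\<in>I2. Nf k))"
  define Target where "Target = Sigma Base (\<lambda>b. PiE I2 (\<lambda>_. Pow (V b)))"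
  define enc where "enc = (\<lambda>S::nat \<Rightarrow> nat set. ((S 1, restrict (\<lambda>k. S k - UnS S k) I2), restrict (\<lambda>k. S k \<inter> UnS S k) I2))"
  define wt where "wt = (\<lambda>((A::nat set, Nf::nat \<Rightarrow> nat set), Of::nat \<Rightarrow> nat set). wa (card A) * (\<Prod>k\<in>I2. wn (card (Nf k))))"
  have finAA: "finite AA" unfolding AA_def by auto
  have finNN: "finite NN" unfolding NN_def by auto
  have finI2: "finite I2" unfolding I2_def by simp
  have cardI2: "card I2 = K - 1" unfolding I2_def by simp
  have finBase: "finite Base" unfolding Base_def using finAA finNN finI2 by (auto intro!: finite_PiE)
  have NNsub: "N \<in> NN \<Longrightarrow> N \<subseteq> {1..n}" for N unfolding NN_def by auto
  have finV: "b \<in> Base \<Longrightarrow> finite (V b)" for b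
  proof -
    assume b: "b \<in> Base"
    have "V b \<subseteq> {1..n}" using b NNsub unfolding Base_def V_def AA_def by (auto simp: PiE_iff)
    then show ?thesis by (rule finite_subset) simp
  qed
  have finTarget: "finite Target" unfolding Target_def using finBase finV finI2
    by (intro finite_SigmaI finite_PiE) auto
  have wt_nn: "wt z \<ge> 0" for z unfolding wt_def using wa wn by (auto intro!: mult_nonneg_nonneg prod_nonneg split: prod.splits)
  have inj: "inj_on enc SS"
  proof (rule inj_onI)
    fix S S' assume S: "S \<in> SS" and S': "S' \<in> SS" and e: "enc S = enc S'"
    have S1: "S 1 = S' 1" using e unfolding enc_def by simp
    have Sk: "S k = S' k" if k: "k \<in> I2" for k
    proof -
      have "restrict (\<lambda>k. S k - UnS S k) I2 k = restrict (\<lambda>k. S' k - UnS S' k) I2 k"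
        using e unfolding enc_def by simp
      moreover have "restrict (\<lambda>k. S k \<inter> UnS S k) I2 k = restrict (\<lambda>k. S' k \<inter> UnS S' k) I2 k"
        using e unfolding enc_def by simp
      ultimately have "S k - UnS S k = S' k - UnS S' k" "S k \<inter> UnS S k = S' k \<inter> UnS S' k" using k by auto
      then show ?thesis by blast
    qed
    show "S = S'"
    proof
      fix k
      show "S k = S' k"
      proof (cases "k \<in> {1..K}")
        case True
        then have "k = 1 \<or> k \<in> I2" unfolding I2_def by auto
        then show ?thesis using S1 Sk by auto
      next
        case False
        then show ?thesis using S S' unfolding SS_def by (auto simp: PiE_def extensional_def)
      qed
    qed
  qed
  have img: "enc ` SS \<subseteq> Target"
  proof
    fix z assume "z \<in> enc ` SS"
    then obtain S where S: "S \<in> SS" and z: "z = enc S" by auto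
    have SP: "S \<in> PiE {1..K} (\<lambda>_. Pow {1..n})" "Pa (card (S 1))" "\<forall>k\<in>{2..K}. Pn (card (S k - UnS S k))"
      using S unfolding SS_def by auto
    have S1: "S 1 \<in> AA" using SP K unfolding AA_def by (auto simp: PiE_iff)
    have SN: "restrict (\<lambda>k. S k - UnS S k) I2 \<in> PiE I2 (\<lambda>_. NN)"
      using SP unfolding NN_def I2_def by (auto simp: PiE_iff)
    have SO: "restrict (\<lambda>k. S k \<inter> UnS S k) I2 \<in> PiE I2 (\<lambda>_. Pow (V (S 1, restrict (\<lambda>k. S k - UnS S k) I2)))"
    proof -
      have "S k \<inter> UnS S k \<subseteq> S 1 \<union> (\<Union>j\<in>I2. restrict (\<lambda>k. S k - UnS S k) I2 j)" if k: "k \<in> I2" for k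
      proof -
        have "UnS S k \<subseteq> S 1 \<union> (\<Union>j\<in>{2..<k}. S j - UnS S j)" using k unfolding I2_def by (intro UnS_sub) auto
        moreover have "{2..<k} \<subseteq> I2" using k unfolding I2_def by auto
        ultimately show ?thesis by force
      qed
      then show ?thesis unfolding V_def by (auto simp: PiE_iff)
    qed
    show "z \<in> Target" unfolding z enc_def Target_def Base_def using S1 SN SO by auto
  qed
  have "(\<Sum>S\<in>SS. wa (card (S 1)) * (\<Prod>k\<in>{2..K}. wn (card (S k - UnS S k)))) = (\<Sum>S\<in>SS. wt (enc S))"
    by (intro sum.cong refl) (simp add: wt_def enc_def I2_def)
  also have "\<dots> = (\<Sum>z\<in>enc ` SS. wt z)" by (simp add: sum.reindex[OF inj])
  also have "\<dots> \<le> (\<Sum>z\<in>Target. wt z)" by (rule sum_mono2[OF finTarget img]) (rule wt_nn)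
  also have "\<dots> = (\<Sum>b\<in>Base. \<Sum>Of\<in>PiE I2 (\<lambda>_. Pow (V b)). wt (b, Of))"
  proof -
    have "(\<Sum>b\<in>Base. \<Sum>Of\<in>PiE I2 (\<lambda>_. Pow (V b)). wt (b, Of)) = sum (case_prod (\<lambda>b Of. wt (b, Of))) (Sigma Base (\<lambda>b. PiE I2 (\<lambda>_. Pow (V b))))"
      by (rule sum.Sigma) (use finBase finV finI2 in \<open>auto intro!: finite_PiE\<close>)
    then show ?thesis unfolding Target_def by simp
  qed
  also have "\<dots> = (\<Sum>b\<in>Base. wt (b, undefined) * (2 ^ card (V b)) ^ (K - 1))"
  proof (rule sum.cong[OF refl])
    fix b assume b: "b \<in> Base"
    have "(\<Sum>Of\<in>PiE I2 (\<lambda>_. Pow (V b)). wt (b, Of)) = (\<Sum>Of\<in>PiE I2 (\<lambda>_. Pow (V b)). wt (b, undefined))"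
      by (intro sum.cong refl) (simp add: wt_def split: prod.splits)
    also have "\<dots> = wt (b, undefined) * real (card (PiE I2 (\<lambda>_. Pow (V b))))" by simp
    also have "card (PiE I2 (\<lambda>_. Pow (V b))) = (2 ^ card (V b)) ^ (K - 1)"
      using finI2 finV[OF b] by (simp add: card_PiE card_Pow cardI2)
    finally show "(\<Sum>Of\<in>PiE I2 (\<lambda>_. Pow (V b)). wt (b, Of)) = wt (b, undefined) * (2 ^ card (V b)) ^ (K - 1)" by simp
  qed
  also have "\<dots> \<le> (\<Sum>b\<in>Base. (2 ^ ((K - 1) * card (fst b)) * wa (card (fst b))) *
                                (\<Prod>k\<in>I2. 2 ^ ((K - 1) * card (snd b k)) * wn (card (snd b k))))"
  proof (rule sum_mono)
    fix b assume b: "b \<in> Base"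
    obtain A Nf where bAN: "b = (A, Nf)" by (cases b)
    have Nf: "Nf k \<in> NN" if "k \<in> I2" for k using b that unfolding bAN Base_def by (auto simp: PiE_iff)
    have finA: "finite A" using b unfolding bAN Base_def AA_def by (auto intro: finite_subset)
    have finN: "finite (Nf k)" if "k \<in> I2" for k using Nf[OF that] NNsub by (auto intro: finite_subset)
    have cV: "card (V b) \<le> card A + (\<Sum>k\<in>I2. card (Nf k))"
    proof -
      have "card (V b) \<le> card A + card (\<Union>k\<in>I2. Nf k)" unfolding bAN V_def by (simp add: card_Un_le)
      also have "card (\<Union>k\<in>I2. Nf k) \<le> (\<Sum>k\<in>I2. card (Nf k))" by (rule card_UN_le[OF finI2])
      finally show ?thesis by simp
    qed
    have pw: "((2::real) ^ card (V b)) ^ (K - 1) \<le> 2 ^ ((K - 1) * card A) * (\<Prod>k\<in>I2. 2 ^ ((K - 1) * card (Nf k)))"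
    proof -
      have "((2::real) ^ card (V b)) ^ (K - 1) = 2 ^ ((K - 1) * card (V b))" by (simp add: power_mult[symmetric] mult.commute)
      also have "\<dots> \<le> 2 ^ ((K - 1) * (card A + (\<Sum>k\<in>I2. card (Nf k))))"
        by (intro power_increasing mult_le_mono2 cV) simp
      also have "\<dots> = 2 ^ ((K - 1) * card A) * 2 ^ (\<Sum>k\<in>I2. (K - 1) * card (Nf k))"
        by (simp add: distrib_left power_add sum_distrib_left)
      also have "(2::real) ^ (\<Sum>k\<in>I2. (K - 1) * card (Nf k)) = (\<Prod>k\<in>I2. 2 ^ ((K - 1) * card (Nf k)))"
        by (rule power_sum)
      finally show ?thesis .
    qed
    have "wt (b, undefined) * (2 ^ card (V b)) ^ (K - 1) = wa (card A) * (\<Prod>k\<in>I2. wn (card (Nf k))) * (2 ^ card (V b)) ^ (K - 1)"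
      unfolding bAN wt_def by simp
    also have "\<dots> \<le> wa (card A) * (\<Prod>k\<in>I2. wn (card (Nf k))) * (2 ^ ((K - 1) * card A) * (\<Prod>k\<in>I2. 2 ^ ((K - 1) * card (Nf k))))"
      by (intro mult_left_mono pw mult_nonneg_nonneg wa prod_nonneg wn)
    also have "\<dots> = (2 ^ ((K - 1) * card A) * wa (card A)) * (\<Prod>k\<in>I2. 2 ^ ((K - 1) * card (Nf k)) * wn (card (Nf k)))"
      by (simp add: prod.distrib ac_simps)
    finally show "wt (b, undefined) * (2 ^ card (V b)) ^ (K - 1) \<le> (2 ^ ((K - 1) * card (fst b)) * wa (card (fst b))) *
                                (\<Prod>k\<in>I2. 2 ^ ((K - 1) * card (snd b k)) * wn (card (snd b k)))"
      unfolding bAN by simp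
  qed
  also have "\<dots> = (\<Sum>A\<in>AA. 2 ^ ((K - 1) * card A) * wa (card A)) *
                  (\<Sum>Nf\<in>PiE I2 (\<lambda>_. NN). \<Prod>k\<in>I2. 2 ^ ((K - 1) * card (Nf k)) * wn (card (Nf k)))"
    unfolding Base_def sum_product sum.cartesian_product by (simp add: split_def)
  also have "(\<Sum>Nf\<in>PiE I2 (\<lambda>_. NN). \<Prod>k\<in>I2. 2 ^ ((K - 1) * card (Nf k)) * wn (card (Nf k)))
           = (\<Prod>k\<in>I2. \<Sum>N\<in>NN. 2 ^ ((K - 1) * card N) * wn (card N))"
    by (rule prod_sum_PiE[symmetric]) (use finI2 finNN in auto)
  also have "\<dots> = (\<Sum>N\<in>NN. 2 ^ ((K - 1) * card N) * wn (card N)) ^ (K - 1)"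
    by (simp add: cardI2)
  finally show ?thesis unfolding SS_def AA_def NN_def .
qed


lemma Cn_upper:
  assumes r: "r \<ge> 2" and n: "n \<ge> 1"
  shows "real ((n - 1) choose (r - 1)) \<le> real n ^ (r - 1) / fact (r - 1)"
proof -
  have "real ((n - 1) choose (r - 1)) * fact (r - 1) \<le> real (n - 1) ^ (r - 1)" by (rule choose_upper)
  also have "\<dots> \<le> real n ^ (r - 1)" by (intro power_mono) auto
  finally show ?thesis by (simp add: pos_le_divide_eq)
qed

lemma pen_gen:
  fixes y j :: nat and d D :: real
  assumes r: "r \<ge> 2" and n: "n \<ge> 1" and Cp: "((n - 1) choose (r - 1)) > 0" and dp: "d > 0"
    and jy: "j \<le> y"
  shows "d * ((real y - real j) ^ j / fact j) / (real n ^ (r - 1) / fact (r - 1))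
         \<le> d / real ((n - 1) choose (r - 1)) * real (y choose j)"
proof -
  have a: "(real y - real j) ^ j / fact j \<le> real (y choose j)"
    using choose_lower[OF jy] by (simp add: pos_divide_le_eq)
  have b: "real ((n - 1) choose (r - 1)) \<le> real n ^ (r - 1) / fact (r - 1)" by (rule Cn_upper[OF r n])
  have "d * ((real y - real j) ^ j / fact j) / (real n ^ (r - 1) / fact (r - 1))
      \<le> d * real (y choose j) / real ((n - 1) choose (r - 1))"
  proof (rule frac_le)
    show "0 \<le> d * real (y choose j)" using dp by simp
    show "d * ((real y - real j) ^ j / fact j) \<le> d * real (y choose j)" using a dp by (intro mult_left_mono) auto
    show "0 < real ((n - 1) choose (r - 1))" using Cp by simp
    show "real ((n - 1) choose (r - 1)) \<le> real n ^ (r - 1) / fact (r - 1)" by (rule b)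
  qed
  then show ?thesis by simp
qed

lemma pen_1:
  fixes a :: nat and d :: real
  assumes r: "r \<ge> 2" and n: "n \<ge> 1" and Cp: "((n - 1) choose (r - 1)) > 0" and dp: "d > 0"
    and ar: "r \<le> a"
  shows "d * (real a - real r) ^ r / (real r * real n ^ (r - 1)) \<le> d / real ((n - 1) choose (r - 1)) * real (a choose r)"
proof -
  have rr: "Suc (r - 1) = r" using r by simp
  have f: "(fact r :: real) = real r * fact (r - 1)"
    using fact_Suc[of "r - 1"] unfolding rr by simp
  have "d * (real a - real r) ^ r / (real r * real n ^ (r - 1))
      = d * ((real a - real r) ^ r / fact r) / (real n ^ (r - 1) / fact (r - 1))"
    unfolding f by (simp add: field_simps)
  also have "\<dots> \<le> d / real ((n - 1) choose (r - 1)) * real (a choose r)" by (rule pen_gen[OF r n Cp dp ar])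
  finally show ?thesis .
qed

lemma pen_k:
  fixes y :: nat and d Y :: real
  assumes r: "r \<ge> 2" and n: "n \<ge> 1" and Cp: "((n - 1) choose (r - 1)) > 0" and dp: "d > 0"
    and Y: "Y - real r \<ge> 0" "Y \<le> real y"
  shows "d * (Y - real r) ^ (r - 1) / real n ^ (r - 1) \<le> d / real ((n - 1) choose (r - 1)) * real (y choose (r - 1))"
proof -
  have jy: "r - 1 \<le> y" using Y r by linarith
  have "(Y - real r) ^ (r - 1) \<le> (real y - real (r - 1)) ^ (r - 1)"
    using Y r by (intro power_mono) (auto simp: of_nat_diff)
  then have "d * (Y - real r) ^ (r - 1) / real n ^ (r - 1) \<le> d * (real y - real (r - 1)) ^ (r - 1) / real n ^ (r - 1)"
    using dp by (intro divide_right_mono mult_left_mono) auto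
  also have "\<dots> = d * ((real y - real (r - 1)) ^ (r - 1) / fact (r - 1)) / (real n ^ (r - 1) / fact (r - 1))"
    by simp
  also have "\<dots> \<le> d / real ((n - 1) choose (r - 1)) * real (y choose (r - 1))" by (rule pen_gen[OF r n Cp dp jy])
  finally show ?thesis .
qed


lemma ev_weight:
  fixes r K n T :: nat and \<epsilon> d s :: real and S tt
  assumes r: "r \<ge> 2" and n: "n \<ge> 1" and K: "K \<ge> 1" and ord: "is_order n r ord" and m: "(n choose r) \<ge> 1"
    and Cp: "((n - 1) choose (r - 1)) > 0" and dp: "d > 0"
    and p1: "d / real ((n - 1) choose (r - 1)) \<le> 1"
    and eps: "\<epsilon> > 0" and sR: "(1 + \<epsilon>/2) * s - real r \<ge> 0"
    and Ssub: "\<forall>k\<in>{1..K}. S k \<subseteq> {1..n}" and tt: "\<forall>k\<in>{1..K}. tt k \<le> T"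
    and Scard: "\<forall>k\<in>{1..K}. (1 + \<epsilon>) * s \<le> real (card (S k))"
    and Snew: "\<forall>k\<in>{2..K}. real (card (S k - UnS S k)) \<le> \<epsilon> / 2 * s"
  shows "measure_pmf.prob (path_noise (n choose r) T (d / real ((n - 1) choose (r - 1))))
           {W. \<forall>k\<in>{1..K}. indep_in (n choose r) ord (path (n choose r) W (tt k)) (S k)}
         \<le> exp (- (d * (real (card (S 1)) - real r) ^ r / (real r * real n ^ (r - 1)))) *
           (\<Prod>k\<in>{2..K}. exp (- (real (card (S k - UnS S k)) * (d * ((1 + \<epsilon>/2) * s - real r) ^ (r - 1) / real n ^ (r - 1)))))"
proof -
  define p where "p = d / real ((n - 1) choose (r - 1))"
  define Q where "Q = d * ((1 + \<epsilon>/2) * s - real r) ^ (r - 1) / real n ^ (r - 1)"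
  define P1 where "P1 = d * (real (card (S 1)) - real r) ^ r / (real r * real n ^ (r - 1))"
  define N where "N = (\<Sum>k\<in>{1..K}. card (Enew r S k))"
  have pp: "0 \<le> p" "p \<le> 1" unfolding p_def using dp p1 by auto
  have finS: "finite (S k)" if "k \<in> {1..K}" for k using Ssub that by (meson finite_atLeastAtMost finite_subset)
  have ev: "measure_pmf.prob (path_noise (n choose r) T p)
           {W. \<forall>k\<in>{1..K}. indep_in (n choose r) ord (path (n choose r) W (tt k)) (S k)} \<le> (1 - p) ^ N"
    unfolding N_def by (rule event_bound[OF ord refl m Ssub tt pp])
  have e2: "(1 - p) ^ N \<le> exp (- (p * real N))"
  proof -
    have "(1 - p) ^ N \<le> exp (- p) ^ N" using pp by (intro power_mono) (auto simp: add.commute[of 1] exp_ge_add_one_self[of "-p", simplified])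
    also have "\<dots> = exp (- (p * real N))" by (simp add: exp_of_nat_mult[symmetric] mult.commute)
    finally show ?thesis .
  qed
  have S1card: "real r \<le> real (card (S 1))"
  proof -
    have "(1 + \<epsilon>) * s \<le> real (card (S 1))" using Scard K by auto
    moreover have "(1 + \<epsilon>/2) * s \<le> (1 + \<epsilon>) * s"
    proof -
      have "s \<ge> 0"
      proof (rule ccontr)
        assume "\<not> s \<ge> 0"
        then have "(1 + \<epsilon>/2) * s < 0" using eps by (simp add: mult_pos_neg)
        then show False using sR r by simp
      qed
      then show ?thesis using eps by (intro mult_right_mono) auto
    qed
    ultimately show ?thesis using sR by linarith
  qed
  have pen1: "P1 \<le> p * real (card (Enew r S 1))"
  proof -
    have "card (Enew r S 1) = card (S 1) choose r" by (rule Enew_1) (use r finS K in auto)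
    moreover have "P1 \<le> p * real (card (S 1) choose r)"
      unfolding P1_def p_def by (rule pen_1[OF r n Cp dp]) (use S1card in simp)
    ultimately show ?thesis by simp
  qed
  have penk: "real (card (S k - UnS S k)) * Q \<le> p * real (card (Enew r S k))" if k: "k \<in> {2..K}" for k
  proof -
    define x where "x = card (S k - UnS S k)"
    define y where "y = card (S k \<inter> UnS S k)"
    have kK: "k \<in> {1..K}" using k by auto
    have cs: "card (S k) = y + x" unfolding x_def y_def by (rule card_Int_Diff[OF finS[OF kK]])
    have sy: "(1 + \<epsilon>/2) * s \<le> real y"
    proof -
      have "(1 + \<epsilon>) * s \<le> real (card (S k))" using Scard kK by blast
      then have "(1 + \<epsilon>) * s \<le> real y + real x" using cs by simp
      moreover have "real x \<le> \<epsilon> / 2 * s" using Snew k unfolding x_def by auto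
      ultimately show ?thesis by (simp add: algebra_simps)
    qed
    have "Q \<le> p * real (y choose (r - 1))"
      unfolding Q_def p_def by (rule pen_k[OF r n Cp dp sR sy])
    then have "real x * Q \<le> real x * (p * real (y choose (r - 1)))" by (intro mult_left_mono) auto
    also have "\<dots> = p * real (x * (y choose (r - 1)))" by simp
    also have "\<dots> \<le> p * real (card (Enew r S k))"
    proof -
      have "x * (y choose (r - 1)) \<le> card (Enew r S k)"
        unfolding x_def y_def by (rule Enew_k) (use r finS[OF kK] in auto)
      then have "real (x * (y choose (r - 1))) \<le> real (card (Enew r S k))" by (simp only: of_nat_le_iff)
      then show ?thesis by (rule mult_left_mono[OF _ pp(1)])
    qed
    finally show ?thesis unfolding x_def .
  qed
  have Nsplit: "p * real N = p * real (card (Enew r S 1)) + (\<Sum>k\<in>{2..K}. p * real (card (Enew r S k)))"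
  proof -
    have "N = card (Enew r S 1) + (\<Sum>k\<in>{Suc 1..K}. card (Enew r S k))"
      unfolding N_def by (rule sum.atLeast_Suc_atMost) (use K in simp)
    also have "Suc 1 = 2" by simp
    finally have "N = card (Enew r S 1) + (\<Sum>k\<in>{2..K}. card (Enew r S k))" .
    then show ?thesis by (simp add: distrib_left sum_distrib_left)
  qed
  have pN: "P1 + (\<Sum>k\<in>{2..K}. real (card (S k - UnS S k)) * Q) \<le> p * real N"
  proof -
    have "(\<Sum>k\<in>{2..K}. real (card (S k - UnS S k)) * Q) \<le> (\<Sum>k\<in>{2..K}. p * real (card (Enew r S k)))"
      by (rule sum_mono) (rule penk)
    then show ?thesis unfolding Nsplit using pen1 by linarith
  qed
  have "exp (- (p * real N)) \<le> exp (- (P1 + (\<Sum>k\<in>{2..K}. real (card (S k - UnS S k)) * Q)))"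
    using pN by simp
  also have "\<dots> = exp (- P1) * (\<Prod>k\<in>{2..K}. exp (- (real (card (S k - UnS S k)) * Q)))"
  proof -
    have "- (P1 + (\<Sum>k\<in>{2..K}. real (card (S k - UnS S k)) * Q)) = - P1 + (\<Sum>k\<in>{2..K}. - (real (card (S k - UnS S k)) * Q))"
      by (simp add: sum_negf)
    then show ?thesis by (simp only: exp_add exp_sum[OF finite_atLeastAtMost])
  qed
  finally show ?thesis using ev e2 unfolding P1_def Q_def p_def by linarith
qed


lemma Kfactor:
  fixes \<epsilon> :: real and K r :: nat
  assumes eps: "\<epsilon> > 0" and r: "r \<ge> 2" and Kbig: "2 ^ (r + 1) / \<epsilon> ^ r \<le> real K - 1"
  shows "(real K - 1) * (\<epsilon> / 4 * (\<epsilon> / 2) ^ (r - 1)) \<ge> 1"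
proof -
  have rr: "Suc (r - 1) = r" using r by simp
  have e1: "\<epsilon> / 4 * (\<epsilon> / 2) ^ (r - 1) = \<epsilon> ^ r / 2 ^ (r + 1)"
  proof -
    have "\<epsilon> / 4 * (\<epsilon> / 2) ^ (r - 1) = (\<epsilon> * \<epsilon> ^ (r - 1)) / (4 * 2 ^ (r - 1))"
      by (simp add: power_divide)
    also have "\<epsilon> * \<epsilon> ^ (r - 1) = \<epsilon> ^ r" using power_Suc[of \<epsilon> "r - 1"] unfolding rr by simp
    also have "(4::real) * 2 ^ (r - 1) = 2 ^ (r + 1)"
    proof -
      have "(2::real) ^ (r + 1) = 2 ^ (Suc (Suc (r - 1)))" using rr by simp
      then show ?thesis by simp
    qed
    finally show ?thesis .
  qed
  have pos: "\<epsilon> ^ r / 2 ^ (r + 1) > 0" using eps by simp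
  have "1 = (2 ^ (r + 1) / \<epsilon> ^ r) * (\<epsilon> ^ r / 2 ^ (r + 1))" using eps by simp
  also have "\<dots> \<le> (real K - 1) * (\<epsilon> ^ r / 2 ^ (r + 1))" using Kbig pos by (intro mult_right_mono) auto
  finally show ?thesis unfolding e1 .
qed

lemma core_bound:
  fixes r K n T :: nat and \<epsilon> d \<alpha> L :: real and ord
  assumes r: "r \<ge> 2" and K: "K \<ge> 2" and eps: "\<epsilon> > 0" and Kbig: "2 ^ (r + 1) / \<epsilon> ^ r \<le> real K - 1"
    and dp: "d > 0" and al: "\<alpha> > 0" and h\<alpha>: "alpha r d = \<alpha>" and L: "d * \<alpha> ^ (r - 1) = L" and lnal: "- ln \<alpha> \<le> L"
    and LK: "32 * real r * (1 + real K) \<le> L"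
    and LN: "16 * real r * (1 + real K + \<bar>ln (4/\<epsilon>)\<bar>) \<le> L * (\<epsilon>/2) ^ (r - 1)"
    and n: "n \<ge> 1" and nr: "r \<le> n" and s1: "32 * real r ^ 3 \<le> \<alpha> * real n" and s2: "32 * real r ^ 3 / \<epsilon> \<le> \<alpha> * real n"
    and Cd: "d \<le> real ((n - 1) choose (r - 1))" and ord: "is_order n r ord"
  shows "measure_pmf.prob (path_noise (n choose r) T (d / real ((n - 1) choose (r - 1))))
           {W. bad_seq n r ord T d \<epsilon> K W}
         \<le> (real T + 1) ^ K * (real n + 1) ^ K * exp (- (3 / (4 * real r)) * (\<alpha> * real n) * L)"
proof -
  define R where "R = real r"
  define s where "s = \<alpha> * real n"
  define m where "m = n choose r"
  define p where "p = d / real ((n - 1) choose (r - 1))"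
  define Q where "Q = d * ((1 + \<epsilon>/2) * s - real r) ^ (r - 1) / real n ^ (r - 1)"
  define wa where "wa = (\<lambda>a::nat. exp (- (d * (real a - real r) ^ r / (real r * real n ^ (r - 1)))))"
  define wn where "wn = (\<lambda>x::nat. exp (- (real x * Q)))"
  define h where "h = (\<lambda>S::nat \<Rightarrow> nat set. wa (card (S 1)) * (\<Prod>k\<in>{2..K}. wn (card (S k - UnS S k))))"
  define SSx where "SSx = {S \<in> PiE {1..K} (\<lambda>_. Pow {1..n}). (\<forall>k\<in>{1..K}. (1 + \<epsilon>) * s \<le> real (card (S k))) \<and>
      (\<forall>k\<in>{2..K}. \<epsilon> / 4 * s \<le> real (card (S k - UnS S k)) \<and> real (card (S k - UnS S k)) \<le> \<epsilon> / 2 * s)}"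
  define TT where "TT = PiE {1..K} (\<lambda>_::nat. {0..T})"
  define Ev where "Ev = (\<lambda>(S::nat \<Rightarrow> nat set, tt::nat \<Rightarrow> nat). {W. \<forall>k\<in>{1..K}. indep_in m ord (path m W (tt k)) (S k)})"
  define Pa where "Pa = (\<lambda>a::nat. (1 + \<epsilon>) * s \<le> real a)"
  define Pn where "Pn = (\<lambda>x::nat. \<epsilon> / 4 * s \<le> real x \<and> real x \<le> \<epsilon> / 2 * s)"
  define M where "M = path_noise m T p"
  have R: "R \<ge> 2" using r unfolding R_def by simp
  have K1: "K \<ge> 1" using K by simp
  have m1: "m \<ge> 1" unfolding m_def using nr by (simp add: Suc_le_eq)
  have Cp: "((n - 1) choose (r - 1)) > 0"
  proof -
    have "real ((n - 1) choose (r - 1)) > 0" using Cd dp by linarith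
    then show ?thesis by (simp only: of_nat_0_less_iff)
  qed
  have p1: "p \<le> 1" unfolding p_def using Cd Cp by simp
  have R3: "R \<le> R ^ 3"
  proof -
    have "R * R \<ge> 1 * 1" using R by (intro mult_mono) auto
    then have "R * 1 \<le> R * (R * R)" using R by (intro mult_left_mono) auto
    then show ?thesis by (simp add: power3_eq_cube)
  qed
  have spos: "s \<ge> 32 * R ^ 3" using s1 unfolding s_def R_def .
  have s0: "s \<ge> 0" using spos R3 R by linarith
  have sR: "(1 + \<epsilon>/2) * s - real r \<ge> 0"
  proof -
    have "s \<ge> R" using spos R3 R by linarith
    moreover have "(1 + \<epsilon>/2) * s \<ge> 1 * s" using eps s0 by (intro mult_right_mono) auto
    ultimately show ?thesis unfolding R_def by linarith
  qed
  have stepA: "{W. bad_seq n r ord T d \<epsilon> K W} \<subseteq> (\<Union>z\<in>SSx \<times> TT. Ev z)"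
  proof
    fix W assume "W \<in> {W. bad_seq n r ord T d \<epsilon> K W}"
    then obtain S0 where S0:
        "\<forall>k\<in>{1..K}. S0 k \<subseteq> {1..n}"
        "\<forall>k\<in>{1..K}. \<exists>t\<le>T. indep_in (n choose r) ord (path (n choose r) W t) (S0 k)"
        "\<forall>k\<in>{1..K}. real (card (S0 k)) \<ge> (1 + \<epsilon>) * alpha r d * real n"
        "\<forall>k\<in>{2..K}. \<epsilon> / 4 * alpha r d * real n \<le> real (card (S0 k - (\<Union>l\<in>{1..<k}. S0 l))) \<and>
           real (card (S0 k - (\<Union>l\<in>{1..<k}. S0 l))) \<le> \<epsilon> / 2 * alpha r d * real n"
      unfolding bad_seq_def by blast
    define S where "S = restrict S0 {1..K}"
    define tt where "tt = restrict (\<lambda>k. SOME t. t \<le> T \<and> indep_in m ord (path m W t) (S0 k)) {1..K}"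
    have US: "UnS S k = (\<Union>l\<in>{1..<k}. S0 l)" if "k \<in> {1..K}" for k
      using that unfolding UnS_def S_def by auto
    have SS: "S \<in> SSx"
      unfolding SSx_def
    proof (intro CollectI conjI ballI)
      show "S \<in> PiE {1..K} (\<lambda>_. Pow {1..n})" unfolding S_def using S0(1) by auto
    next
      fix k assume k: "k \<in> {1..K}"
      show "(1 + \<epsilon>) * s \<le> real (card (S k))" using S0(3) k h\<alpha> unfolding S_def s_def by (auto simp: ac_simps)
    next
      fix k assume k: "k \<in> {2..K}"
      then have k1: "k \<in> {1..K}" by auto
      show "\<epsilon> / 4 * s \<le> real (card (S k - UnS S k))" using S0(4) k US[OF k1] h\<alpha> unfolding S_def s_def
        using k1 by (auto simp: ac_simps)
      show "real (card (S k - UnS S k)) \<le> \<epsilon> / 2 * s" using S0(4) k US[OF k1] h\<alpha> unfolding S_def s_def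
        using k1 by (auto simp: ac_simps)
    qed
    have tt: "tt \<in> TT" and ind: "\<forall>k\<in>{1..K}. indep_in m ord (path m W (tt k)) (S k)"
    proof -
      have sm: "tt k \<le> T \<and> indep_in m ord (path m W (tt k)) (S0 k)" if k: "k \<in> {1..K}" for k
      proof -
        have "\<exists>t. t \<le> T \<and> indep_in m ord (path m W t) (S0 k)" using S0(2) k unfolding m_def by blast
        then have "(SOME t. t \<le> T \<and> indep_in m ord (path m W t) (S0 k)) \<le> T \<and>
            indep_in m ord (path m W (SOME t. t \<le> T \<and> indep_in m ord (path m W t) (S0 k))) (S0 k)"
          by (rule someI_ex)
        then show ?thesis unfolding tt_def using k by simp
      qed
      show "tt \<in> TT" unfolding TT_def using sm by (auto simp: tt_def)
      show "\<forall>k\<in>{1..K}. indep_in m ord (path m W (tt k)) (S k)" using sm unfolding S_def by auto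
    qed
    show "W \<in> (\<Union>z\<in>SSx \<times> TT. Ev z)" using SS tt ind unfolding Ev_def by auto
  qed
  have finSSx: "finite SSx" unfolding SSx_def by (auto intro!: finite_PiE)
  have finTT: "finite TT" unfolding TT_def by (auto intro!: finite_PiE)
  have "measure_pmf.prob M {W. bad_seq n r ord T d \<epsilon> K W} \<le> measure_pmf.prob M (\<Union>z\<in>SSx \<times> TT. Ev z)"
    by (rule measure_pmf.finite_measure_mono[OF stepA]) simp
  also have "\<dots> \<le> (\<Sum>z\<in>SSx \<times> TT. measure_pmf.prob M (Ev z))"
    by (rule measure_UNION_le) (use finSSx finTT in auto)
  also have "\<dots> \<le> (\<Sum>z\<in>SSx \<times> TT. h (fst z))"
  proof (rule sum_mono)
    fix z assume z: "z \<in> SSx \<times> TT"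
    obtain S tt where zst: "z = (S, tt)" by (cases z)
    have S: "S \<in> SSx" and tt: "tt \<in> TT" using z zst by auto
    have Ssub: "\<forall>k\<in>{1..K}. S k \<subseteq> {1..n}" using S unfolding SSx_def by (auto simp: PiE_iff)
    have ttb: "\<forall>k\<in>{1..K}. tt k \<le> T" using tt unfolding TT_def by (auto simp: PiE_iff)
    have Sc: "\<forall>k\<in>{1..K}. (1 + \<epsilon>) * s \<le> real (card (S k))" using S unfolding SSx_def by auto
    have Sn: "\<forall>k\<in>{2..K}. real (card (S k - UnS S k)) \<le> \<epsilon> / 2 * s" using S unfolding SSx_def by auto
    have "measure_pmf.prob M (Ev z) \<le> exp (- (d * (real (card (S 1)) - real r) ^ r / (real r * real n ^ (r - 1)))) *
           (\<Prod>k\<in>{2..K}. exp (- (real (card (S k - UnS S k)) * (d * ((1 + \<epsilon>/2) * s - real r) ^ (r - 1) / real n ^ (r - 1)))))"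
      unfolding M_def m_def p_def zst Ev_def prod.case
      by (rule ev_weight[OF r n K1 ord m1[unfolded m_def] Cp dp p1[unfolded p_def] eps sR Ssub ttb Sc Sn])
    then show "measure_pmf.prob M (Ev z) \<le> h (fst z)" unfolding h_def wa_def wn_def Q_def zst by simp
  qed
  also have "\<dots> = (\<Sum>S\<in>SSx. \<Sum>tt\<in>TT. h S)"
    unfolding sum.cartesian_product by (simp only: split_def)
  also have "\<dots> = real (card TT) * (\<Sum>S\<in>SSx. h S)" by (simp add: sum_distrib_left)
  also have "real (card TT) = (real T + 1) ^ K" unfolding TT_def by (simp add: card_PiE add.commute)
  finally have stepC: "measure_pmf.prob M {W. bad_seq n r ord T d \<epsilon> K W} \<le> (real T + 1) ^ K * (\<Sum>S\<in>SSx. h S)" .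
  have wa0: "wa a \<ge> 0" for a unfolding wa_def by simp
  have wn0: "wn x \<ge> 0" for x unfolding wn_def by simp
  have h0: "h S \<ge> 0" for S unfolding h_def using wa0 wn0 by (intro mult_nonneg_nonneg prod_nonneg) auto
  define SSP where "SSP = {S \<in> PiE {1..K} (\<lambda>_. Pow {1..n}). Pa (card (S 1)) \<and> (\<forall>k\<in>{2..K}. Pn (card (S k - UnS S k)))}"
  define FA where "FA = (\<Sum>A\<in>{A\<in>Pow {1..n}. Pa (card A)}. 2 ^ ((K - 1) * card A) * wa (card A))"
  define FN where "FN = (\<Sum>N\<in>{N\<in>Pow {1..n}. Pn (card N)}. 2 ^ ((K - 1) * card N) * wn (card N))"
  have "SSx \<subseteq> SSP" unfolding SSx_def SSP_def Pa_def Pn_def using K1 by auto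
  moreover have "finite SSP" unfolding SSP_def by (auto intro!: finite_PiE)
  ultimately have "(\<Sum>S\<in>SSx. h S) \<le> (\<Sum>S\<in>SSP. h S)" by (intro sum_mono2) (auto intro: h0)
  also have "\<dots> \<le> FA * FN ^ (K - 1)"
    unfolding SSP_def FA_def FN_def h_def by (rule seq_sum_bound[OF wa0 wn0 K1])
  finally have stepD: "(\<Sum>S\<in>SSx. h S) \<le> FA * FN ^ (K - 1)" .
  define EA where "EA = exp (s * L * (1 - 7 / (8 * real r)))"
  define EN where "EN = exp (- (\<epsilon> * s / 4 * L * (\<epsilon>/2) ^ (r - 1) * (1 - 1 / (8 * real r))))"
  have FA: "FA \<le> (real n + 1) * EA"
    unfolding FA_def
  proof (rule sum_card_bound)
    show "{A \<in> Pow {1..n}. Pa (card A)} \<subseteq> Pow {1..n}" by auto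
    show "\<And>a. 0 \<le> 2 ^ ((K - 1) * a) * wa a" using wa0 by simp
    show "0 \<le> EA" unfolding EA_def by simp
    fix A assume A: "A \<in> {A \<in> Pow {1..n}. Pa (card A)}"
    have cA: "card A \<le> n" using A card_mono[of "{1..n}" A] by auto
    have sA: "s \<le> real (card A)"
    proof -
      have "s \<le> (1 + \<epsilon>) * s" using eps s0 by (simp add: algebra_simps)
      then show ?thesis using A unfolding Pa_def by auto
    qed
    have "real (n choose card A) * 2 ^ ((K - 1) * card A) * wa (card A) \<le> EA"
      unfolding wa_def EA_def
      by (rule A_size[OF r n al s_def dp L lnal LK spos[unfolded R_def] sA cA])
    then show "real (n choose card A) * (2 ^ ((K - 1) * card A) * wa (card A)) \<le> EA" by (simp add: ac_simps)
  qed
  have FN: "FN \<le> (real n + 1) * EN"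
    unfolding FN_def
  proof (rule sum_card_bound)
    show "{N \<in> Pow {1..n}. Pn (card N)} \<subseteq> Pow {1..n}" by auto
    show "\<And>a. 0 \<le> 2 ^ ((K - 1) * a) * wn a" using wn0 by simp
    show "0 \<le> EN" unfolding EN_def by simp
    fix N assume N: "N \<in> {N \<in> Pow {1..n}. Pn (card N)}"
    have xN: "\<epsilon> * s / 4 \<le> real (card N)" using N unfolding Pn_def by auto
    have "real (n choose card N) * 2 ^ ((K - 1) * card N) * wn (card N) \<le> EN"
      unfolding wn_def EN_def Q_def
      by (rule N_size[OF r n al s_def dp L lnal eps _ s2[folded s_def] xN]) (use LN in simp)
    then show "real (n choose card N) * (2 ^ ((K - 1) * card N) * wn (card N)) \<le> EN" by (simp add: ac_simps)
  qed
  have FN0: "FN \<ge> 0" unfolding FN_def using wn0 by (intro sum_nonneg) simp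
  have "FA * FN ^ (K - 1) \<le> ((real n + 1) * EA) * ((real n + 1) * EN) ^ (K - 1)"
    using FA FN FN0 by (intro mult_mono power_mono) (auto simp: EA_def EN_def)
  also have "\<dots> = (real n + 1) ^ K * (EA * EN ^ (K - 1))"
  proof -
    have "(real n + 1) * (real n + 1) ^ (K - 1) = (real n + 1) ^ K"
      using K1 by (metis power_Suc Suc_diff_1 less_le_trans zero_less_one less_numeral_extra(1) not_one_le_zero le_eq_less_or_eq)
    then show ?thesis by (simp add: power_mult_distrib ac_simps)
  qed
  also have "EA * EN ^ (K - 1) \<le> exp (- (3 / (4 * real r)) * s * L)"
  proof -
    define g where "g = (\<epsilon>/2) ^ (r - 1)"
    have kf: "(real K - 1) * (\<epsilon> / 4 * g) \<ge> 1" unfolding g_def by (rule Kfactor[OF eps r Kbig])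
    have "32 * real r * (1 + real K) \<ge> 0" by simp
    then have Lp: "L \<ge> 0" using LK by linarith
    have sL: "s * L \<ge> 0" using s0 Lp by simp
    have q: "1 - 1 / (8 * R) \<ge> 0" using R by simp
    have "EN ^ (K - 1) = exp (real (K - 1) * (- (\<epsilon> * s / 4 * L * g * (1 - 1 / (8 * R)))))"
      unfolding EN_def g_def R_def exp_of_nat_mult ..
    also have "real (K - 1) = real K - 1" using K1 by (simp add: of_nat_diff)
    finally have ENp: "EN ^ (K - 1) = exp (- ((real K - 1) * (\<epsilon> / 4 * g)) * (s * L * (1 - 1 / (8 * R))))"
      by (simp add: ac_simps)
    have "(real K - 1) * (\<epsilon> / 4 * g) * (s * L * (1 - 1 / (8 * R))) \<ge> 1 * (s * L * (1 - 1 / (8 * R)))"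
      using kf sL q by (intro mult_right_mono) auto
    then have "s * L * (1 - 7 / (8 * R)) + (- ((real K - 1) * (\<epsilon> / 4 * g)) * (s * L * (1 - 1 / (8 * R))))
        \<le> s * L * (1 - 7 / (8 * R)) - s * L * (1 - 1 / (8 * R))" by simp
    also have "\<dots> = - (3 / (4 * R)) * s * L" by (simp add: algebra_simps)
    finally have ex: "s * L * (1 - 7 / (8 * R)) + (- ((real K - 1) * (\<epsilon> / 4 * g)) * (s * L * (1 - 1 / (8 * R))))
        \<le> - (3 / (4 * R)) * s * L" .
    have "EA * EN ^ (K - 1) = exp (s * L * (1 - 7 / (8 * R)) + (- ((real K - 1) * (\<epsilon> / 4 * g)) * (s * L * (1 - 1 / (8 * R)))))"
      unfolding ENp EA_def R_def by (simp only: exp_add)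
    also have "\<dots> \<le> exp (- (3 / (4 * R)) * s * L)" using ex by simp
    finally show ?thesis unfolding R_def .
  qed
  finally have stepF: "FA * FN ^ (K - 1) \<le> (real n + 1) ^ K * exp (- (3 / (4 * real r)) * s * L)"
    by (simp add: mult_left_mono)
  have "measure_pmf.prob M {W. bad_seq n r ord T d \<epsilon> K W} \<le> (real T + 1) ^ K * (FA * FN ^ (K - 1))"
    using stepC stepD by (meson mult_left_mono order_trans zero_le_power of_nat_0_le_iff add_nonneg_nonneg zero_le_one)
  also have "\<dots> \<le> (real T + 1) ^ K * ((real n + 1) ^ K * exp (- (3 / (4 * real r)) * s * L))"
    using stepF by (intro mult_left_mono) auto
  finally show ?thesis unfolding M_def m_def p_def s_def by (simp add: ac_simps)
qed


theorem mainTheorem13: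
  fixes r K :: nat and \<epsilon> a :: real
  assumes "r \<ge> 2" and "\<epsilon> > 0" and "a > 0"
    and "real K \<ge> real_of_int (ceiling (2 ^ (r + 1) / \<epsilon> ^ r)) + 1"
  shows "\<exists>d0. \<forall>d \<ge> d0. \<exists>c > 0. \<exists>N. \<forall>n \<ge> N. \<forall>T ord.
           real T \<le> real n powr a \<longrightarrow> is_order n r ord \<longrightarrow>
           measure_pmf.prob (path_noise (n choose r) T (d / real ((n - 1) choose (r - 1))))
             {W. bad_seq n r ord T d \<epsilon> K W} \<le> exp (- c * real n)"
proof -
  note r = assms(1) and eps = assms(2) and ap = assms(3)
  define R where "R = real r"
  have R: "R \<ge> 2" using r unfolding R_def by simp
  have Kbig: "2 ^ (r + 1) / \<epsilon> ^ r \<le> real K - 1"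
    using assms(4) le_of_int_ceiling[of "2 ^ (r + 1) / \<epsilon> ^ r"] by linarith
  have xpos: "2 ^ (r + 1) / \<epsilon> ^ r > (0::real)" using eps by simp
  have K: "K \<ge> 2"
  proof -
    have "real K > 1" using Kbig xpos by linarith
    then show ?thesis by simp
  qed
  define g where "g = (\<epsilon>/2) ^ (r - 1)"
  have gp: "g > 0" unfolding g_def using eps by simp
  define C1 where "C1 = 1 + real K + \<bar>ln (4/\<epsilon>)\<bar>"
  define L0 where "L0 = max 1 (max (32 * R * (1 + real K)) (16 * R * C1 / g))"
  define d0 where "d0 = exp ((R - 1) * L0)"
  have L01: "L0 \<ge> 1" unfolding L0_def by simp
  have R1: "R - 1 \<ge> 1" using R by simp
  show ?thesis
  proof (rule exI[of _ d0], intro allI impI)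
    fix d assume dd: "d \<ge> d0"
    have dp: "d > 0" using dd exp_gt_zero[of "(R - 1) * L0"] unfolding d0_def by linarith
    define L where "L = ln d / (R - 1)"
    have lnd: "ln d \<ge> (R - 1) * L0"
    proof -
      have "ln (exp ((R - 1) * L0)) \<le> ln d" using dd dp unfolding d0_def by (subst ln_le_cancel_iff) auto
      then show ?thesis by simp
    qed
    have LL0: "L \<ge> L0" unfolding L_def using lnd R1 by (simp add: pos_le_divide_eq mult.commute)
    have L1: "L \<ge> 1" using LL0 L01 by simp
    have LK: "32 * real r * (1 + real K) \<le> L" using LL0 unfolding L0_def R_def by simp
    have LN: "16 * real r * (1 + real K + \<bar>ln (4/\<epsilon>)\<bar>) \<le> L * (\<epsilon>/2) ^ (r - 1)"
    proof -
      have "16 * R * C1 / g \<le> L" using LL0 unfolding L0_def by simp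
      then have "16 * R * C1 \<le> L * g" using gp by (simp add: pos_divide_le_eq)
      then show ?thesis unfolding R_def C1_def g_def .
    qed
    define \<alpha> where "\<alpha> = alpha r d"
    have rr1: "real (r - 1) = R - 1" unfolding R_def using r by (simp add: of_nat_diff)
    have Ld: "1 / (real r - 1) * (ln d / d) = L / d" unfolding L_def R_def by simp
    have adef: "\<alpha> = (L / d) powr (1 / (R - 1))" unfolding \<alpha>_def alpha_def Ld R_def ..
    have Ldp: "L / d > 0" using L1 dp by simp
    have al: "\<alpha> > 0" unfolding adef using Ldp L1 dp by simp
    have apow: "\<alpha> ^ (r - 1) = L / d"
    proof -
      have "\<alpha> ^ (r - 1) = \<alpha> powr real (r - 1)" using al by (simp add: powr_realpow)
      also have "\<dots> = (L / d) powr (1 / (R - 1) * (R - 1))" unfolding adef rr1 by (simp add: powr_powr)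
      also have "1 / (R - 1) * (R - 1) = 1" using R1 by simp
      finally show ?thesis using Ldp L1 dp by simp
    qed
    have Lal: "d * \<alpha> ^ (r - 1) = L" using apow dp by simp
    have lnal: "- ln \<alpha> \<le> L"
    proof -
      have "ln \<alpha> = 1 / (R - 1) * ln (L / d)" unfolding adef using Ldp by (simp add: ln_powr)
      also have "ln (L / d) = ln L - ln d" using L1 dp by (simp add: ln_div)
      finally have "ln \<alpha> = (ln L - ln d) / (R - 1)" by simp
      then have "- ln \<alpha> = ln d / (R - 1) - ln L / (R - 1)" by (simp add: diff_divide_distrib)
      moreover have "ln L / (R - 1) \<ge> 0" using L1 R1 by simp
      ultimately show ?thesis unfolding L_def by linarith
    qed
    define \<beta> where "\<beta> = \<alpha> * L / (4 * R)"
    have bp: "\<beta> > 0" unfolding \<beta>_def using al L1 R by simp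
    define c where "c = \<alpha> * L / (2 * R)"
    have cp: "c > 0" unfolding c_def using al L1 R by simp
    have ev: "eventually (\<lambda>n::nat. real K * ln (real n powr a + 1) + real K * ln (real n + 1) \<le> \<beta> * real n) sequentially"
      using ap bp by real_asymp
    then obtain N1 where N1: "\<And>n. n \<ge> N1 \<Longrightarrow> real K * ln (real n powr a + 1) + real K * ln (real n + 1) \<le> \<beta> * real n"
      unfolding eventually_sequentially by blast
    define N2 where "N2 = nat \<lceil>32 * R ^ 3 / \<alpha> + 32 * R ^ 3 / (\<epsilon> * \<alpha>) + d * (R - 1)\<rceil> + r + 1"
    define N where "N = max N1 N2"
    have final: "\<forall>n\<ge>N. \<forall>T ord. real T \<le> real n powr a \<longrightarrow> is_order n r ord \<longrightarrow>
           measure_pmf.prob (path_noise (n choose r) T (d / real ((n - 1) choose (r - 1))))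
             {W. bad_seq n r ord T d \<epsilon> K W} \<le> exp (- c * real n)"
    proof (intro allI impI)
      fix n T ord assume nN: "n \<ge> N" and Ta: "real T \<le> real n powr a" and ord: "is_order n r ord"
      have nN1: "n \<ge> N1" and nN2: "n \<ge> N2" using nN unfolding N_def by auto
      have t1: "32 * R ^ 3 / \<alpha> \<ge> 0" "32 * R ^ 3 / (\<epsilon> * \<alpha>) \<ge> 0" "d * (R - 1) \<ge> 0"
        using al eps R dp by auto
      have nreal: "real n \<ge> 32 * R ^ 3 / \<alpha> + 32 * R ^ 3 / (\<epsilon> * \<alpha>) + d * (R - 1) + R + 1"
      proof -
        have "real N2 = real (nat \<lceil>32 * R ^ 3 / \<alpha> + 32 * R ^ 3 / (\<epsilon> * \<alpha>) + d * (R - 1)\<rceil>) + R + 1"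
          unfolding N2_def R_def by simp
        moreover have "real (nat \<lceil>32 * R ^ 3 / \<alpha> + 32 * R ^ 3 / (\<epsilon> * \<alpha>) + d * (R - 1)\<rceil>) \<ge> 32 * R ^ 3 / \<alpha> + 32 * R ^ 3 / (\<epsilon> * \<alpha>) + d * (R - 1)"
          by linarith
        moreover have "real n \<ge> real N2" using nN2 by simp
        ultimately show ?thesis by linarith
      qed
      have n1: "n \<ge> 1" and nr: "r \<le> n" using nN2 unfolding N2_def by auto
      have s1: "32 * real r ^ 3 \<le> \<alpha> * real n"
      proof -
        have "32 * R ^ 3 / \<alpha> \<le> real n" using nreal t1 R by linarith
        then show ?thesis using al unfolding R_def by (simp add: pos_divide_le_eq mult.commute)
      qed
      have s2: "32 * real r ^ 3 / \<epsilon> \<le> \<alpha> * real n"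
      proof -
        have "32 * R ^ 3 / (\<epsilon> * \<alpha>) \<le> real n" using nreal t1 R by linarith
        then have "32 * R ^ 3 \<le> real n * (\<epsilon> * \<alpha>)" using al eps by (simp add: pos_divide_le_eq)
        then show ?thesis using eps unfolding R_def by (simp add: pos_divide_le_eq ac_simps)
      qed
      have Cd: "d \<le> real ((n - 1) choose (r - 1))"
      proof -
        define x where "x = real (n - 1) / real (r - 1)"
        have rp: "real (r - 1) > 0" using r by simp
        have n1r: "real (n - 1) = real n - 1" using n1 by (simp add: of_nat_diff)
        have dx: "d \<le> x"
        proof -
          have "d * (R - 1) \<le> real n - 1" using nreal t1 R by linarith
          then show ?thesis unfolding x_def n1r rr1 using R1 by (simp add: pos_le_divide_eq)
        qed
        have x1: "x \<ge> 1"
        proof -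
          have "R - 1 \<le> real n - 1" using nreal t1 R by linarith
          then show ?thesis unfolding x_def n1r rr1 using R1 by simp
        qed
        have "x = x ^ 1" by simp
        also have "\<dots> \<le> x ^ (r - 1)" by (rule power_increasing) (use r x1 in auto)
        also have "\<dots> \<le> real ((n - 1) choose (r - 1))" unfolding x_def
          by (rule binomial_ge_n_over_k_pow_k) (use nr in auto)
        finally show ?thesis using dx by linarith
      qed
      have main: "measure_pmf.prob (path_noise (n choose r) T (d / real ((n - 1) choose (r - 1))))
           {W. bad_seq n r ord T d \<epsilon> K W}
         \<le> (real T + 1) ^ K * (real n + 1) ^ K * exp (- (3 / (4 * real r)) * (\<alpha> * real n) * L)"
        by (rule core_bound[OF r K eps Kbig dp al \<alpha>_def[symmetric] Lal lnal LK LN n1 nr s1 s2 Cd ord])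
      have np: "real n powr a + 1 > 0" by (simp add: add_nonneg_pos)
      have "(real T + 1) ^ K * (real n + 1) ^ K \<le> (real n powr a + 1) ^ K * (real n + 1) ^ K"
        using Ta by (intro mult_right_mono power_mono) auto
      also have "\<dots> = exp (real K * ln (real n powr a + 1) + real K * ln (real n + 1))"
        using np by (simp add: exp_add exp_of_nat_mult exp_ln ac_simps)
      also have "\<dots> \<le> exp (\<beta> * real n)" using N1[OF nN1] by simp
      finally have pw: "(real T + 1) ^ K * (real n + 1) ^ K \<le> exp (\<beta> * real n)" .
      have "(real T + 1) ^ K * (real n + 1) ^ K * exp (- (3 / (4 * real r)) * (\<alpha> * real n) * L)
          \<le> exp (\<beta> * real n) * exp (- (3 / (4 * real r)) * (\<alpha> * real n) * L)"
        using pw by (intro mult_right_mono) auto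
      also have "\<dots> = exp (\<beta> * real n + (- (3 / (4 * real r)) * (\<alpha> * real n) * L))" by (simp only: exp_add)
      also have "\<beta> * real n + (- (3 / (4 * real r)) * (\<alpha> * real n) * L) = - c * real n"
        unfolding \<beta>_def c_def R_def using r by (simp add: field_simps)
      finally show "measure_pmf.prob (path_noise (n choose r) T (d / real ((n - 1) choose (r - 1))))
             {W. bad_seq n r ord T d \<epsilon> K W} \<le> exp (- c * real n)" using main by linarith
    qed
    show "\<exists>c>0. \<exists>N. \<forall>n\<ge>N. \<forall>T ord. real T \<le> real n powr a \<longrightarrow> is_order n r ord \<longrightarrow>
           measure_pmf.prob (path_noise (n choose r) T (d / real ((n - 1) choose (r - 1))))
             {W. bad_seq n r ord T d \<epsilon> K W} \<le> exp (- c * real n)"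
      using cp final by blast
  qed
qed


end
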